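(* The restrictions $\iota_{1\otimes2}:\mathcal B^0\to S^0(A^{(1)}_{1\otimes2})\otimes S^0(A^{(2)}_{1\otimes2})$ and $\iota_{2\otimes1}:\mathcal B^0\to S^0(A^{(2)}_{2\otimes1})\otimes S^0(A^{(1)}_{2\otimes1})$ are both isomorphisms of algebras with respect to the shuffle product.
   Context: Forms: $\zeta_i=dz_i/z_i$, $\zeta_{ii}=dz_i/(1-z_i)$ ($i=1,2$), $\zeta_{12}=d(z_1z_2)/(1-z_1z_2)$, $\zeta^{(1)}_{12}=z_2dz_1/(1-z_1z_2)$, $\zeta^{(2)}_{12}=z_1dz_2/(1-z_1z_2)$. For an alphabet $B$, $S(B)$ is the vector space with basis the words in $B$ (empty word $\mathbf 1$), with concatenation $\circ$, shuffle product ($\mathbf 1⧢w=w⧢\mathbf 1=w$, $(a\circ u)⧢(b\circ v)=a\circ(u⧢(b\circ v))+b\circ((a\circ u)⧢v)$) and coproduct $\Delta^*(\omega_1\circ\cdots\circ\omega_s)=\sum_{l=0}^s(\omega_1\circ\cdots\circ\omega_l)\otimes(\omega_{l+1}\circ\cdots\circ\omega_s)$. $A=\{\zeta_1,\zeta_{11},\zeta_2,\zeta_{22},\zeta_{12}\}$, $A^{(1)}_{1\otimes2}=\{\zeta_1,\zeta_{11},\zeta^{(1)}_{12}\}$, $A^{(2)}_{1\otimes2}=\{\zeta_2,\zeta_{22}\}$, $A^{(2)}_{2\otimes1}=\{\zeta_2,\zeta_{22},\zeta^{(2)}_{12}\}$, $A^{(1)}_{2\otimes1}=\{\zeta_1,\zeta_{11}\}$;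 $S^0(\cdot)$ is the span of words not ending with $\zeta_1$ or $\zeta_2$. $\mathcal B$ is the span of homogeneous elements $\sum_Ic_I\omega_{i_1}\circ\cdots\circ\omega_{i_s}$ of $S(A)$ with $\sum_Ic_I\omega_{i_1}\otimes\cdots\otimes(\omega_{i_l}\wedge\omega_{i_{l+1}})\otimes\cdots\otimes\omega_{i_s}=0$ for all $1\le l<s$ (Chen's integrability condition); $\mathcal B^0\subset\mathcal B$ consists of elements none of whose words ends with $\zeta_1$ or $\zeta_2$. For $\{i_1,i_2\}=\{1,2\}$, $\Pr^{(i_1)}_{i_1\otimes i_2}:S(A)\to S(A^{(i_1)}_{i_1\otimes i_2})$ replaces each letter by its restriction to $dz_{i_2}=0$ ($\zeta_{i_1}\mapsto\zeta_{i_1}$, $\zeta_{i_1i_1}\mapsto\zeta_{i_1i_1}$, $\zeta_{12}\mapsto\zeta^{(i_1)}_{12}$, $\zeta_{i_2},\zeta_{i_2i_2}\mapsto0$), $\Pr^{(i_2)}_{i_1\otimes i_2}:S(A)\to S(A^{(i_2)}_{i_1\otimes i_2})$ fixes words in $\zeta_{i_2},\zeta_{i_2i_2}$ and kills all other words, and $\iota_{i_1\otimes i_2}=(\Pr^{(i_1)}_{i_1\otimes i_2}\otimes\Pr^{(i_2)}_{i_1\otimes i_2})\circ\Delta^*|_{\mathcal B}$. *)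

theory Defs
  imports Complex_Main
begin

text \<open>Z1 = zeta_1, Z11 = zeta_11, Z2 = zeta_2, Z22 = zeta_22, Z12 = zeta_12,
  Z12a = zeta_12^(1) = z2 dz1/(1-z1z2), Z12b = zeta_12^(2) = z1 dz2/(1-z1z2).\<close>

datatype letter = Z1 | Z11 | Z2 | Z22 | Z12 | Z12a | Z12b

text \<open>A 1-form f dz1 + g dz2 is represented by the pair (f, g) of coefficient functions.\<close>
fun form :: "letter \<Rightarrow> complex \<times> complex \<Rightarrow> complex \<times> complex" where
  "form Z1 (z1, z2) = (1 / z1, 0)"
| "form Z11 (z1, z2) = (1 / (1 - z1), 0)"
| "form Z2 (z1, z2) = (0, 1 / z2)"
| "form Z22 (z1, z2) = (0, 1 / (1 - z2))"
| "form Z12 (z1, z2) = (z2 / (1 - z1 * z2), z1 / (1 - z1 * z2))"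
| "form Z12a (z1, z2) = (z2 / (1 - z1 * z2), 0)"
| "form Z12b (z1, z2) = (0, z1 / (1 - z1 * z2))"

definition Dom :: "(complex \<times> complex) set" where
  "Dom = {(z1, z2). z1 \<noteq> 0 \<and> z2 \<noteq> 0 \<and> z1 \<noteq> 1 \<and> z2 \<noteq> 1 \<and> z1 * z2 \<noteq> 1}"

text \<open>Coefficient of dz1 /\ dz2 in the wedge product of two letters.\<close>
definition wedge :: "letter \<Rightarrow> letter \<Rightarrow> complex \<times> complex \<Rightarrow> complex" where
  "wedge a b z = fst (form a z) * snd (form b z) - snd (form a z) * fst (form b z)"

definition Aset :: "letter set" where
  "Aset = {Z1, Z11, Z2, Z22, Z12}"

type_synonym lin = "letter list \<Rightarrow> complex"
type_synonym tens = "letter list \<times> letter list \<Rightarrow> complex"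

definition supp :: "('a \<Rightarrow> complex) \<Rightarrow> 'a set" where
  "supp x = {w. x w \<noteq> 0}"

definition delta :: "'a \<Rightarrow> 'a \<Rightarrow> complex" where
  "delta u = (\<lambda>w. if w = u then 1 else 0)"

definition prepend :: "letter \<Rightarrow> lin \<Rightarrow> lin" where
  "prepend a f = (\<lambda>w. case w of [] \<Rightarrow> 0 | c # w' \<Rightarrow> if c = a then f w' else 0)"

fun shw :: "letter list \<Rightarrow> letter list \<Rightarrow> lin" where
  "shw [] v = delta v"
| "shw u [] = delta u"
| "shw (a # u) (b # v) = (\<lambda>w. prepend a (shw u (b # v)) w + prepend b (shw (a # u) v) w)"

definition shuffle :: "lin \<Rightarrow> lin \<Rightarrow> lin" where
  "shuffle x y = (\<lambda>w. \<Sum>(u, v) \<in> supp x \<times> supp y. x u * y v * shw u v w)"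

definition tshuffle :: "tens \<Rightarrow> tens \<Rightarrow> tens" where
  "tshuffle X Y = (\<lambda>(p, q). \<Sum>((u1, v1), (u2, v2)) \<in> supp X \<times> supp Y.
       X (u1, v1) * Y (u2, v2) * shw u1 u2 p * shw v1 v2 q)"

definition unit_S :: lin where "unit_S = delta []"
definition unit_T :: tens where "unit_T = delta ([], [])"

definition coprod :: "lin \<Rightarrow> tens" where
  "coprod x = (\<lambda>(p, q). x (p @ q))"

text \<open>Letter-wise restriction maps (None = the letter restricts to 0).\<close>
fun mapw :: "(letter \<Rightarrow> letter option) \<Rightarrow> letter list \<Rightarrow> letter list option" where
  "mapw f [] = Some []"
| "mapw f (a # w) = (case (f a, mapw f w) of (Some b, Some w') \<Rightarrow> Some (b # w') | _ \<Rightarrow> None)"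

definition proj_tensor :: "(letter \<Rightarrow> letter option) \<Rightarrow> (letter \<Rightarrow> letter option) \<Rightarrow> tens \<Rightarrow> tens" where
  "proj_tensor f g X = (\<lambda>(p, q). \<Sum>(u, v) \<in> {(u, v) \<in> supp X. mapw f u = Some p \<and> mapw g v = Some q}. X (u, v))"

definition iota :: "(letter \<Rightarrow> letter option) \<Rightarrow> (letter \<Rightarrow> letter option) \<Rightarrow> lin \<Rightarrow> tens" where
  "iota f g x = proj_tensor f g (coprod x)"

text \<open>Pr^(1)_{1(x)2}: restriction to dz2 = 0.\<close>
fun pr1_12 :: "letter \<Rightarrow> letter option" where
  "pr1_12 Z1 = Some Z1" | "pr1_12 Z11 = Some Z11" | "pr1_12 Z12 = Some Z12a" | "pr1_12 _ = None"
fun pr2_12 :: "letter \<Rightarrow> letter option" where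
  "pr2_12 Z2 = Some Z2" | "pr2_12 Z22 = Some Z22" | "pr2_12 _ = None"
text \<open>Pr^(2)_{2(x)1}: restriction to dz1 = 0.\<close>
fun pr2_21 :: "letter \<Rightarrow> letter option" where
  "pr2_21 Z2 = Some Z2" | "pr2_21 Z22 = Some Z22" | "pr2_21 Z12 = Some Z12b" | "pr2_21 _ = None"
fun pr1_21 :: "letter \<Rightarrow> letter option" where
  "pr1_21 Z1 = Some Z1" | "pr1_21 Z11 = Some Z11" | "pr1_21 _ = None"

definition S0word :: "letter list \<Rightarrow> bool" where
  "S0word w \<longleftrightarrow> w = [] \<or> last w \<notin> {Z1, Z2}"

definition S_space :: "letter set \<Rightarrow> lin set" where
  "S_space B = {x. finite (supp x) \<and> supp x \<subseteq> lists B}"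

definition tensor_S0 :: "letter set \<Rightarrow> letter set \<Rightarrow> tens set" where
  "tensor_S0 B1 B2 = {X. finite (supp X) \<and>
     (\<forall>(p, q) \<in> supp X. p \<in> lists B1 \<and> S0word p \<and> q \<in> lists B2 \<and> S0word q)}"

definition hcomp :: "nat \<Rightarrow> lin \<Rightarrow> lin" where
  "hcomp n x = (\<lambda>w. if length w = n then x w else 0)"

definition chen :: "nat \<Rightarrow> lin \<Rightarrow> bool" where
  "chen s y \<longleftrightarrow> (\<forall>l. 1 \<le> l \<and> l < s \<longrightarrow>
     (\<forall>u v. length u = l - 1 \<and> length v = s - l - 1 \<longrightarrow>
        (\<forall>z \<in> Dom. (\<Sum>a\<in>Aset. \<Sum>b\<in>Aset. y (u @ [a, b] @ v) * wedge a b z) = 0)))"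

definition B_space :: "lin set" where
  "B_space = {x \<in> S_space Aset. \<forall>n. chen n (hcomp n x)}"

definition B0_space :: "lin set" where
  "B0_space = {x \<in> B_space. \<forall>w \<in> supp x. S0word w}"

end

theory Submission
  imports Defs
begin

declare shw.simps[simp del]

lemma shw_Nil2: "shw u [] = delta u"
  by (cases u) (auto simp: shw.simps)

lemma shw_Nil[simp]: "shw s t [] = (if s = [] \<and> t = [] then 1 else 0)"
  by (cases s; cases t) (auto simp: delta_def prepend_def shw.simps)

lemma shw_Cons[simp]: "shw s t (c # w) =
   (case s of [] \<Rightarrow> 0 | a # s' \<Rightarrow> if a = c then shw s' t w else 0) +
   (case t of [] \<Rightarrow> 0 | b # t' \<Rightarrow> if b = c then shw s t' w else 0)"
  by (cases s; cases t) (auto simp: delta_def prepend_def shw_Nil2 shw.simps)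

lemma shw_len_set: "shw s t w \<noteq> 0 \<Longrightarrow> length w = length s + length t \<and> set w = set s \<union> set t"
proof (induction w arbitrary: s t)
  case Nil
  then show ?case by (auto split: if_splits)
next
  case (Cons c w)
  show ?case
  proof (cases "(case s of [] \<Rightarrow> 0 | a # s' \<Rightarrow> if a = c then shw s' t w else 0) \<noteq> 0")
    case True
    then obtain s' where "s = c # s'" "shw s' t w \<noteq> 0" by (auto split: list.splits if_splits)
    with Cons.IH[of s' t] show ?thesis by auto
  next
    case False
    with Cons.prems have "(case t of [] \<Rightarrow> 0 | b # t' \<Rightarrow> if b = c then shw s t' w else 0) \<noteq> 0"
      by simp
    then obtain t' where "t = c # t'" "shw s t' w \<noteq> 0" by (auto split: list.splits if_splits)
    with Cons.IH[of s t'] show ?thesis by auto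
  qed
qed

lemma shw_length: "shw s t w \<noteq> 0 \<Longrightarrow> length w = length s + length t"
  using shw_len_set by blast

lemma shw_set: "shw s t w \<noteq> 0 \<Longrightarrow> set w = set s \<union> set t"
  using shw_len_set by blast

lemma shw_comm: "shw s t w = shw t s w"
  by (induction w arbitrary: s t) (auto split: list.splits)

lemma shw_last: "shw s t w \<noteq> 0 \<Longrightarrow> w \<noteq> [] \<Longrightarrow>
    (s \<noteq> [] \<and> last s = last w) \<or> (t \<noteq> [] \<and> last t = last w)"
proof (induction w arbitrary: s t)
  case Nil
  then show ?case by simp
next
  case (Cons c w)
  show ?case
  proof (cases "(case s of [] \<Rightarrow> 0 | a # s' \<Rightarrow> if a = c then shw s' t w else 0) \<noteq> 0")
    case True
    then obtain s' where s: "s = c # s'" "shw s' t w \<noteq> 0" by (auto split: list.splits if_splits)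
    show ?thesis
    proof (cases "w = []")
      case True with s show ?thesis by (auto split: if_splits)
    next
      case False
      from Cons.IH[OF s(2) False] s False show ?thesis by auto
    qed
  next
    case False
    with Cons.prems have "(case t of [] \<Rightarrow> 0 | b # t' \<Rightarrow> if b = c then shw s t' w else 0) \<noteq> 0"
      by simp
    then obtain t' where s: "t = c # t'" "shw s t' w \<noteq> 0" by (auto split: list.splits if_splits)
    show ?thesis
    proof (cases "w = []")
      case True with s show ?thesis by (auto split: if_splits)
    next
      case False
      from Cons.IH[OF s(2) False] s False show ?thesis by auto
    qed
  qed
qed

lemma shw_map: "inj h \<Longrightarrow> shw (map h s) (map h t) (map h w) = shw s t w"
proof (induction w arbitrary: s t)
  case Nil
  then show ?case by simp
next
  case (Cons c w)
  have e: "\<And>a. (h a = h c) = (a = c)" using Cons.prems by (auto dest: injD)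
  have IH: "\<And>s t. shw (map h s) (map h t) (map h w) = shw s t w" using Cons by blast
  have IH2: "\<And>s a t. shw (map h s) (h a # map h t) (map h w) = shw s (a#t) w"
    using IH by (metis list.map(2))
  have IH3: "\<And>s a t. shw (h a # map h s) (map h t) (map h w) = shw (a#s) t w"
    using IH by (metis list.map(2))
  show ?case
    by (cases s; cases t) (auto simp: e IH IH2 IH3 IH[of "[]", simplified] IH[of _ "[]", simplified])
qed


lemma finite_supp_subset: "finite S \<Longrightarrow> supp x \<subseteq> S \<Longrightarrow> finite (supp x)"
  using finite_subset by blast

lemma shuffle_sup:
  assumes "finite S" "supp x \<subseteq> S" "finite T" "supp y \<subseteq> T"
  shows "shuffle x y w = (\<Sum>(u,v)\<in>S\<times>T. x u * y v * shw u v w)"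
  unfolding shuffle_def
proof (rule sum.mono_neutral_left)
  show "finite (S \<times> T)" using assms by auto
  show "supp x \<times> supp y \<subseteq> S \<times> T" using assms by auto
  show "\<forall>i\<in>S \<times> T - supp x \<times> supp y. (case i of (u, v) \<Rightarrow> x u * y v * shw u v w) = 0"
    by (auto simp: supp_def)
qed

lemma shuffle_comm: "shuffle x y = shuffle y x"
proof
  fix w
  have "shuffle x y w = (\<Sum>u\<in>supp x. \<Sum>v\<in>supp y. x u * y v * shw u v w)"
    unfolding shuffle_def by (simp add: sum.cartesian_product)
  also have "\<dots> = (\<Sum>v\<in>supp y. \<Sum>u\<in>supp x. y v * x u * shw v u w)"
    by (subst sum.swap) (simp add: shw_comm mult_ac)
  also have "\<dots> = shuffle y x w"
    unfolding shuffle_def by (simp add: sum.cartesian_product)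
  finally show "shuffle x y w = shuffle y x w" .
qed

lemma shuffle_sum_left:
  assumes I: "finite I" and fi: "\<And>i. i \<in> I \<Longrightarrow> finite (supp (f i))" and fy: "finite (supp y)"
  shows "shuffle (\<lambda>w. \<Sum>i\<in>I. k i * f i w) y v = (\<Sum>i\<in>I. k i * shuffle (f i) y v)"
proof -
  define S where "S = (\<Union>i\<in>I. supp (f i))"
  have fS: "finite S" using I fi by (auto simp: S_def)
  have s1: "supp (\<lambda>w. \<Sum>i\<in>I. k i * f i w) \<subseteq> S"
  proof
    fix w assume "w \<in> supp (\<lambda>w. \<Sum>i\<in>I. k i * f i w)"
    then have "(\<Sum>i\<in>I. k i * f i w) \<noteq> 0" by (simp add: supp_def)
    then obtain i where "i \<in> I" "k i * f i w \<noteq> 0" by (meson sum.neutral)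
    then show "w \<in> S" by (auto simp: S_def supp_def)
  qed
  have "shuffle (\<lambda>w. \<Sum>i\<in>I. k i * f i w) y v =
      (\<Sum>(u,t)\<in>S\<times>supp y. (\<Sum>i\<in>I. k i * f i u) * y t * shw u t v)"
    by (rule shuffle_sup[OF fS s1 fy]) simp
  also have "\<dots> = (\<Sum>(u,t)\<in>S\<times>supp y. \<Sum>i\<in>I. k i * (f i u * y t * shw u t v))"
    by (rule sum.cong[OF refl]) (auto simp: sum_distrib_right sum_distrib_left mult_ac)
  also have "\<dots> = (\<Sum>i\<in>I. k i * (\<Sum>(u,t)\<in>S\<times>supp y. f i u * y t * shw u t v))"
    by (simp only: sum_distrib_left split_def) (rule sum.swap)
  also have "\<dots> = (\<Sum>i\<in>I. k i * shuffle (f i) y v)"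
  proof (rule sum.cong[OF refl])
    fix i assume "i \<in> I"
    then have "supp (f i) \<subseteq> S" by (auto simp: S_def)
    then show "k i * (\<Sum>(u,t)\<in>S\<times>supp y. f i u * y t * shw u t v) = k i * shuffle (f i) y v"
      using shuffle_sup[OF fS _ fy, where x="f i" and w=v] by simp
  qed
  finally show ?thesis .
qed

lemma shuffle_Nil:
  assumes "finite (supp x)" "finite (supp y)"
  shows "shuffle x y [] = x [] * y []"
proof -
  have "shuffle x y [] = (\<Sum>(u,v)\<in>insert [] (supp x) \<times> insert [] (supp y). x u * y v * shw u v [])"
    by (rule shuffle_sup) (use assms in auto)
  also have "\<dots> = (\<Sum>p\<in>insert [] (supp x) \<times> insert [] (supp y). if p = ([],[]) then x [] * y [] else 0)"
    by (rule sum.cong) (auto split: if_splits)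
  also have "\<dots> = x [] * y []"
    using assms by (simp add: sum.delta')
  finally show ?thesis .
qed

lemma finite_supp_Cons: "finite (supp x) \<Longrightarrow> finite (supp (\<lambda>w. x (c # w)))"
proof -
  assume "finite (supp x)"
  then have "finite (Cons c -` supp x)" by (rule finite_vimageI) (simp add: inj_on_def)
  moreover have "supp (\<lambda>w. x (c # w)) = Cons c -` supp x" by (auto simp: supp_def)
  ultimately show ?thesis by simp
qed

lemma shuffle_Cons_aux:
  assumes fx: "finite (supp x)" and fy: "finite (supp y)"
  shows "(\<Sum>(u,v)\<in>supp x \<times> supp y. x u * y v *
            (case u of [] \<Rightarrow> 0 | a # u' \<Rightarrow> if a = c then shw u' v w else 0))
         = shuffle (\<lambda>w. x (c # w)) y w"
proof -
  define P where "P = {(u,v). (u,v) \<in> supp x \<times> supp y \<and> (\<exists>u'. u = c # u')}"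
  have "(\<Sum>(u,v)\<in>supp x \<times> supp y. x u * y v *
            (case u of [] \<Rightarrow> 0 | a # u' \<Rightarrow> if a = c then shw u' v w else 0))
      = (\<Sum>(u,v)\<in>P. x u * y v *
            (case u of [] \<Rightarrow> 0 | a # u' \<Rightarrow> if a = c then shw u' v w else 0))"
    by (rule sum.mono_neutral_right) (use fx fy in \<open>auto simp: P_def split: list.splits if_splits\<close>)
  also have "\<dots> = (\<Sum>(u,v)\<in>P. x u * y v * shw (tl u) v w)"
    by (rule sum.cong) (auto simp: P_def)
  also have "P = (\<lambda>(u',v). (c # u', v)) ` (supp (\<lambda>w. x (c # w)) \<times> supp y)"
    by (auto simp: P_def supp_def image_iff)
  also have "(\<Sum>(u,v)\<in>(\<lambda>(u',v). (c # u', v)) ` (supp (\<lambda>w. x (c # w)) \<times> supp y). x u * y v * shw (tl u) v w)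
      = (\<Sum>(u',v)\<in>supp (\<lambda>w. x (c # w)) \<times> supp y. x (c # u') * y v * shw u' v w)"
    by (subst sum.reindex) (auto simp: inj_on_def case_prod_beta)
  also have "\<dots> = shuffle (\<lambda>w. x (c # w)) y w" by (simp add: shuffle_def)
  finally show ?thesis .
qed

lemma shuffle_Cons:
  assumes fx: "finite (supp x)" and fy: "finite (supp y)"
  shows "shuffle x y (c # w) = shuffle (\<lambda>w. x (c # w)) y w + shuffle x (\<lambda>w. y (c # w)) w"
proof -
  have "shuffle x y (c # w) = (\<Sum>(u,v)\<in>supp x \<times> supp y. x u * y v *
            (case u of [] \<Rightarrow> 0 | a # u' \<Rightarrow> if a = c then shw u' v w else 0))
       + (\<Sum>(u,v)\<in>supp x \<times> supp y. x u * y v *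
            (case v of [] \<Rightarrow> 0 | b # v' \<Rightarrow> if b = c then shw u v' w else 0))"
    unfolding shuffle_def by (simp add: sum.distrib[symmetric] distrib_left case_prod_beta)
  also have "(\<Sum>(u,v)\<in>supp x \<times> supp y. x u * y v *
            (case v of [] \<Rightarrow> 0 | b # v' \<Rightarrow> if b = c then shw u v' w else 0))
      = (\<Sum>(v,u)\<in>supp y \<times> supp x. y v * x u *
            (case v of [] \<Rightarrow> 0 | b # v' \<Rightarrow> if b = c then shw v' u w else 0))"
    by (simp add: sum.cartesian_product[symmetric])
       (subst sum.swap, rule sum.cong[OF refl], rule sum.cong[OF refl], simp add: shw_comm mult_ac split: list.split)
  also have "\<dots> = shuffle (\<lambda>w. y (c # w)) x w"
    by (rule shuffle_Cons_aux[OF fy fx])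
  also have "(\<Sum>(u,v)\<in>supp x \<times> supp y. x u * y v *
            (case u of [] \<Rightarrow> 0 | a # u' \<Rightarrow> if a = c then shw u' v w else 0))
       = shuffle (\<lambda>w. x (c # w)) y w"
    by (rule shuffle_Cons_aux[OF fx fy])
  finally show ?thesis by (simp add: shuffle_comm)
qed


definition condK :: "letter set \<Rightarrow> (letter \<Rightarrow> letter \<Rightarrow> complex) \<Rightarrow> lin \<Rightarrow> bool" where
  "condK L K x \<longleftrightarrow> (\<forall>u v. (\<Sum>a\<in>L. \<Sum>b\<in>L. x (u @ [a, b] @ v) * K a b) = 0)"

lemma shuffle_zero_left: "shuffle (\<lambda>w. 0) y = (\<lambda>w. 0)"
  by (auto simp: shuffle_def supp_def)

lemma double_sum_prod: "(\<Sum>a\<in>L. \<Sum>b\<in>L. f a b) = (\<Sum>(a,b)\<in>L\<times>L. f a b)"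
  by (simp add: sum.cartesian_product)

lemma condK_shuffle_aux:
  assumes L: "finite L" and K: "\<And>a b. K a b = - K b a"
  shows "finite (supp x) \<Longrightarrow> finite (supp y) \<Longrightarrow> condK L K x \<Longrightarrow> condK L K y \<Longrightarrow>
     (\<Sum>a\<in>L. \<Sum>b\<in>L. shuffle x y (u @ [a, b] @ v) * K a b) = 0"
proof (induction u arbitrary: x y)
  case Nil
  note fx = Nil.prems(1) and fy = Nil.prems(2)
  have fdx: "\<And>c. finite (supp (\<lambda>w. x (c # w)))" using finite_supp_Cons[OF fx] .
  have fdy: "\<And>c. finite (supp (\<lambda>w. y (c # w)))" using finite_supp_Cons[OF fy] .
  have fddx: "\<And>a b. finite (supp (\<lambda>w. x (a # b # w)))"
    using finite_supp_Cons[OF fdx] .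
  have fddy: "\<And>a b. finite (supp (\<lambda>w. y (a # b # w)))"
    using finite_supp_Cons[OF fdy] .
  define T1 where "T1 a b = shuffle (\<lambda>w. x (a # b # w)) y v" for a b
  define T2 where "T2 a b = shuffle (\<lambda>w. x (a # w)) (\<lambda>w. y (b # w)) v" for a b
  define T4 where "T4 a b = shuffle (\<lambda>w. y (a # b # w)) x v" for a b
  have exp: "shuffle x y (a # b # v) = T1 a b + T2 a b + T2 b a + T4 a b" for a b
  proof -
    have "shuffle x y (a # b # v) = shuffle (\<lambda>w. x (a # w)) y (b # v) + shuffle x (\<lambda>w. y (a # w)) (b # v)"
      by (rule shuffle_Cons[OF fx fy])
    also have "shuffle (\<lambda>w. x (a # w)) y (b # v) = T1 a b + T2 a b"
      unfolding T1_def T2_def by (rule shuffle_Cons[OF fdx fy])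
    also have "shuffle x (\<lambda>w. y (a # w)) (b # v) = shuffle (\<lambda>w. y (a # w)) x (b # v)"
      by (simp add: shuffle_comm)
    also have "\<dots> = shuffle (\<lambda>w. y (a # b # w)) x v + shuffle (\<lambda>w. y (a # w)) (\<lambda>w. x (b # w)) v"
      by (rule shuffle_Cons[OF fdy fx])
    also have "\<dots> = T4 a b + T2 b a"
      unfolding T4_def T2_def by (simp add: shuffle_comm)
    finally show ?thesis by simp
  qed
  have s1: "(\<Sum>a\<in>L. \<Sum>b\<in>L. T1 a b * K a b) = 0"
  proof -
    have "(\<Sum>a\<in>L. \<Sum>b\<in>L. T1 a b * K a b) = (\<Sum>(a,b)\<in>L\<times>L. K a b * shuffle (\<lambda>w. x (a # b # w)) y v)"
      by (simp add: double_sum_prod T1_def mult_ac)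
    also have "\<dots> = (\<Sum>p\<in>L\<times>L. K (fst p) (snd p) * shuffle (\<lambda>w. x (fst p # snd p # w)) y v)"
      by (simp add: case_prod_beta)
    also have "\<dots> = shuffle (\<lambda>w. \<Sum>p\<in>L\<times>L. K (fst p) (snd p) * x (fst p # snd p # w)) y v"
      by (rule shuffle_sum_left[symmetric]) (use L fddx fy in auto)
    also have "(\<lambda>w. \<Sum>p\<in>L\<times>L. K (fst p) (snd p) * x (fst p # snd p # w)) = (\<lambda>w. 0)"
    proof
      fix w
      have "(\<Sum>p\<in>L\<times>L. K (fst p) (snd p) * x (fst p # snd p # w)) = (\<Sum>a\<in>L. \<Sum>b\<in>L. x ([] @ [a, b] @ w) * K a b)"
        by (simp add: double_sum_prod case_prod_beta mult_ac)
      also have "\<dots> = 0" using Nil.prems(3) by (simp only: condK_def)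
      finally show "(\<Sum>p\<in>L\<times>L. K (fst p) (snd p) * x (fst p # snd p # w)) = 0" .
    qed
    finally show ?thesis by (simp add: shuffle_zero_left)
  qed
  have s4: "(\<Sum>a\<in>L. \<Sum>b\<in>L. T4 a b * K a b) = 0"
  proof -
    have "(\<Sum>a\<in>L. \<Sum>b\<in>L. T4 a b * K a b) = (\<Sum>(a,b)\<in>L\<times>L. K a b * shuffle (\<lambda>w. y (a # b # w)) x v)"
      by (simp add: double_sum_prod T4_def mult_ac)
    also have "\<dots> = (\<Sum>p\<in>L\<times>L. K (fst p) (snd p) * shuffle (\<lambda>w. y (fst p # snd p # w)) x v)"
      by (simp add: case_prod_beta)
    also have "\<dots> = shuffle (\<lambda>w. \<Sum>p\<in>L\<times>L. K (fst p) (snd p) * y (fst p # snd p # w)) x v"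
      by (rule shuffle_sum_left[symmetric]) (use L fddy fx in auto)
    also have "(\<lambda>w. \<Sum>p\<in>L\<times>L. K (fst p) (snd p) * y (fst p # snd p # w)) = (\<lambda>w. 0)"
    proof
      fix w
      have "(\<Sum>p\<in>L\<times>L. K (fst p) (snd p) * y (fst p # snd p # w)) = (\<Sum>a\<in>L. \<Sum>b\<in>L. y ([] @ [a, b] @ w) * K a b)"
        by (simp add: double_sum_prod case_prod_beta mult_ac)
      also have "\<dots> = 0" using Nil.prems(4) by (simp only: condK_def)
      finally show "(\<Sum>p\<in>L\<times>L. K (fst p) (snd p) * y (fst p # snd p # w)) = 0" .
    qed
    finally show ?thesis by (simp add: shuffle_zero_left)
  qed
  have s23: "(\<Sum>a\<in>L. \<Sum>b\<in>L. (T2 a b + T2 b a) * K a b) = 0"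
  proof -
    have "(\<Sum>a\<in>L. \<Sum>b\<in>L. T2 b a * K a b) = (\<Sum>b\<in>L. \<Sum>a\<in>L. T2 b a * K a b)"
      by (rule sum.swap)
    also have "\<dots> = (\<Sum>a\<in>L. \<Sum>b\<in>L. - (T2 a b * K a b))"
      by (intro sum.cong refl) (metis K mult_minus_right)
    also have "\<dots> = - (\<Sum>a\<in>L. \<Sum>b\<in>L. T2 a b * K a b)"
      by (simp add: sum_negf)
    finally show ?thesis by (simp add: distrib_right sum.distrib)
  qed
  have "(\<Sum>a\<in>L. \<Sum>b\<in>L. shuffle x y ([] @ [a, b] @ v) * K a b)
     = (\<Sum>a\<in>L. \<Sum>b\<in>L. T1 a b * K a b + (T2 a b + T2 b a) * K a b + T4 a b * K a b)"
    by (intro sum.cong refl) (simp add: exp distrib_right)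
  also have "\<dots> = (\<Sum>a\<in>L. \<Sum>b\<in>L. T1 a b * K a b) + (\<Sum>a\<in>L. \<Sum>b\<in>L. (T2 a b + T2 b a) * K a b)
       + (\<Sum>a\<in>L. \<Sum>b\<in>L. T4 a b * K a b)"
    by (simp only: sum.distrib)
  finally show ?case using s1 s23 s4 by simp
next
  case (Cons c u)
  note fx = Cons.prems(1) and fy = Cons.prems(2)
  have fdx: "finite (supp (\<lambda>w. x (c # w)))" using finite_supp_Cons[OF fx] .
  have fdy: "finite (supp (\<lambda>w. y (c # w)))" using finite_supp_Cons[OF fy] .
  have cx: "condK L K (\<lambda>w. x (c # w))" unfolding condK_def
  proof (intro allI)
    fix u' v' show "(\<Sum>a\<in>L. \<Sum>b\<in>L. x (c # u' @ [a, b] @ v') * K a b) = 0"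
      using Cons.prems(3)[unfolded condK_def, rule_format, of "c # u'" v'] by simp
  qed
  have cy: "condK L K (\<lambda>w. y (c # w))" unfolding condK_def
  proof (intro allI)
    fix u' v' show "(\<Sum>a\<in>L. \<Sum>b\<in>L. y (c # u' @ [a, b] @ v') * K a b) = 0"
      using Cons.prems(4)[unfolded condK_def, rule_format, of "c # u'" v'] by simp
  qed
  have "(\<Sum>a\<in>L. \<Sum>b\<in>L. shuffle x y ((c # u) @ [a, b] @ v) * K a b)
      = (\<Sum>a\<in>L. \<Sum>b\<in>L. shuffle (\<lambda>w. x (c # w)) y (u @ [a, b] @ v) * K a b)
      + (\<Sum>a\<in>L. \<Sum>b\<in>L. shuffle x (\<lambda>w. y (c # w)) (u @ [a, b] @ v) * K a b)"
    by (simp add: shuffle_Cons[OF fx fy] distrib_right sum.distrib)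
  also have "\<dots> = 0"
    using Cons.IH[OF fdx fy cx Cons.prems(4)] Cons.IH[OF fx fdy Cons.prems(3) cy] by simp
  finally show ?case .
qed

lemma condK_shuffle:
  assumes "finite L" "\<And>a b. K a b = - K b a" "finite (supp x)" "finite (supp y)"
    "condK L K x" "condK L K y"
  shows "condK L K (shuffle x y)"
  unfolding condK_def by (intro allI condK_shuffle_aux[OF assms(1,2) assms(3-6)])

lemma wedge_anti: "wedge a b z = - wedge b a z"
  unfolding wedge_def by (simp add: algebra_simps)

lemma B_space_iff: "x \<in> B_space \<longleftrightarrow> x \<in> S_space Aset \<and> (\<forall>z\<in>Dom. condK Aset (\<lambda>a b. wedge a b z) x)"
proof -
  have "(\<forall>n. chen n (hcomp n x)) \<longleftrightarrow> (\<forall>z\<in>Dom. condK Aset (\<lambda>a b. wedge a b z) x)"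
  proof
    assume H: "\<forall>n. chen n (hcomp n x)"
    show "\<forall>z\<in>Dom. condK Aset (\<lambda>a b. wedge a b z) x"
      unfolding condK_def
    proof (intro ballI allI)
      fix z and u v :: "letter list" assume z: "z \<in> Dom"
      define n where "n = length u + length v + 2"
      have c: "chen n (hcomp n x)" using H by blast
      have "(\<Sum>a\<in>Aset. \<Sum>b\<in>Aset. hcomp n x (u @ [a, b] @ v) * wedge a b z) = 0"
        using c z unfolding chen_def
        by (elim allE[of _ "Suc (length u)"] allE[of _ u] allE[of _ v]) (auto simp: n_def)
      moreover have "hcomp n x (u @ [a, b] @ v) = x (u @ [a, b] @ v)" for a b
        by (simp add: hcomp_def n_def)
      ultimately show "(\<Sum>a\<in>Aset. \<Sum>b\<in>Aset. x (u @ [a, b] @ v) * wedge a b z) = 0" by simp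
    qed
  next
    assume H: "\<forall>z\<in>Dom. condK Aset (\<lambda>a b. wedge a b z) x"
    show "\<forall>n. chen n (hcomp n x)"
      unfolding chen_def
    proof (intro allI impI ballI)
      fix n l :: nat and u v :: "letter list" and z
      assume l: "1 \<le> l \<and> l < n" and uv: "length u = l - 1 \<and> length v = n - l - 1" and z: "z \<in> Dom"
      have len: "length u + length v + 2 = n" using l uv by arith
      have "hcomp n x (u @ [a, b] @ v) = x (u @ [a, b] @ v)" for a b
        using len by (simp add: hcomp_def)
      then show "(\<Sum>a\<in>Aset. \<Sum>b\<in>Aset. hcomp n x (u @ [a, b] @ v) * wedge a b z) = 0"
        using H z unfolding condK_def by simp
    qed
  qed
  then show ?thesis by (simp add: B_space_def)
qed

lemma finite_Aset: "finite Aset" by (simp add: Aset_def)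


lemma shuffle_supp:
  assumes "w \<in> supp (shuffle x y)"
  shows "\<exists>u\<in>supp x. \<exists>v\<in>supp y. shw u v w \<noteq> 0"
proof (rule ccontr)
  assume "\<not> ?thesis"
  then have "shuffle x y w = 0" unfolding shuffle_def by (intro sum.neutral) auto
  with assms show False by (simp add: supp_def)
qed

lemma shuffle_B0: assumes x: "x \<in> B0_space" and y: "y \<in> B0_space"
  shows "shuffle x y \<in> B0_space"
proof -
  have xB: "x \<in> B_space" and yB: "y \<in> B_space" using x y unfolding B0_space_def by blast+
  have xS: "x \<in> S_space Aset" and yS: "y \<in> S_space Aset"
    using xB yB unfolding B_space_iff by blast+
  have xK: "\<forall>z\<in>Dom. condK Aset (\<lambda>a b. wedge a b z) x" and yK: "\<forall>z\<in>Dom. condK Aset (\<lambda>a b. wedge a b z) y"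
    using xB yB unfolding B_space_iff by blast+
  have fx: "finite (supp x)" and fy: "finite (supp y)" using xS yS by (auto simp: S_space_def)
  have sub: "supp (shuffle x y) \<subseteq> (\<Union>(u,v)\<in>supp x \<times> supp y. {w. set w \<subseteq> set u \<union> set v \<and> length w \<le> length u + length v})"
  proof
    fix w assume "w \<in> supp (shuffle x y)"
    then obtain u v where uv: "u \<in> supp x" "v \<in> supp y" "shw u v w \<noteq> 0" using shuffle_supp by blast
    then show "w \<in> (\<Union>(u,v)\<in>supp x \<times> supp y. {w. set w \<subseteq> set u \<union> set v \<and> length w \<le> length u + length v})"
      using uv shw_length[OF uv(3)] shw_set[OF uv(3)] by (intro UN_I[of "(u,v)"]) auto
  qed
  have fin: "finite (supp (shuffle x y))"
    apply (rule finite_subset[OF sub])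
    apply (rule finite_UN_I)
    using fx fy apply blast
    apply (clarsimp simp: finite_lists_length_le)
    done
  have lists: "supp (shuffle x y) \<subseteq> lists Aset"
  proof
    fix w assume "w \<in> supp (shuffle x y)"
    then obtain u v where "u \<in> supp x" "v \<in> supp y" "shw u v w \<noteq> 0" using shuffle_supp by blast
    moreover have "u \<in> lists Aset" "v \<in> lists Aset" using xS yS \<open>u \<in> supp x\<close> \<open>v \<in> supp y\<close>
      unfolding S_space_def by blast+
    ultimately show "w \<in> lists Aset" using shw_set[of u v w] by (simp add: lists_eq_set)
  qed
  have S0: "\<forall>w\<in>supp (shuffle x y). S0word w"
  proof
    fix w assume "w \<in> supp (shuffle x y)"
    then obtain u v where uv: "u \<in> supp x" "v \<in> supp y" "shw u v w \<noteq> 0" using shuffle_supp by blast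
    have "S0word u" "S0word v" using x y uv unfolding B0_space_def by blast+
    then show "S0word w" using shw_last[OF uv(3)] by (auto simp: S0word_def)
  qed
  have ck: "\<forall>z\<in>Dom. condK Aset (\<lambda>a b. wedge a b z) (shuffle x y)"
  proof
    fix z assume z: "z \<in> Dom"
    show "condK Aset (\<lambda>a b. wedge a b z) (shuffle x y)"
      by (rule condK_shuffle[OF finite_Aset wedge_anti fx fy])
        (use xK yK z in blast)+
  qed
  have "shuffle x y \<in> S_space Aset" using fin lists unfolding S_space_def by blast
  then have "shuffle x y \<in> B_space" using ck unfolding B_space_iff by blast
  then show ?thesis using S0 unfolding B0_space_def by blast
qed

lemma unit_B0: "unit_S \<in> B0_space"
proof -
  have s: "supp unit_S = {[]}" by (auto simp: supp_def unit_S_def delta_def)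
  have "condK Aset (\<lambda>a b. wedge a b z) unit_S" for z
    by (simp add: condK_def unit_S_def delta_def)
  moreover have "unit_S \<in> S_space Aset" using s by (simp add: S_space_def)
  ultimately have "unit_S \<in> B_space" unfolding B_space_iff by blast
  then show ?thesis using s unfolding B0_space_def by (simp add: S0word_def)
qed


lemma sorted_split_unique:
  assumes "F \<inter> B = {}" "s1 \<in> lists F" "s2 \<in> lists F" "q1 \<in> lists B" "q2 \<in> lists B"
    "s1 @ q1 = s2 @ q2"
  shows "s1 = s2 \<and> q1 = q2"
  using assms
proof (induction s1 arbitrary: s2)
  case Nil
  show ?case
  proof (cases s2)
    case Nil then show ?thesis using Nil.prems by simp
  next
    case (Cons a s2')
    then have "a \<in> F" "a \<in> set q1" using Nil.prems by auto
    then show ?thesis using Nil.prems by auto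
  qed
next
  case (Cons a s1)
  show ?case
  proof (cases s2)
    case Nil
    then have "a \<in> F" "a \<in> set q2" using Cons.prems by auto
    then show ?thesis using Cons.prems by auto
  next
    case (Cons b s2')
    then show ?thesis using Cons.IH[of s2'] Cons.prems by auto
  qed
qed

locale fib =
  fixes Fb Bs :: "letter set" and kF kB :: letter
    and D :: "letter \<Rightarrow> letter \<Rightarrow> letter \<Rightarrow> letter \<Rightarrow> complex"
    and A1 :: "letter set" and h :: "letter \<Rightarrow> letter"
    and f g :: "letter \<Rightarrow> letter option"
  assumes Aset_split: "Aset = Fb \<union> Bs" and disj: "Fb \<inter> Bs = {}"
    and kF: "kF \<in> Fb" and kB: "kB \<in> Bs" and kk: "{Z1, Z2} = {kF, kB}"
    and DkF: "\<And>\<beta> c d. D \<beta> kF c d = 0"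
    and wid: "\<And>z c d. z \<in> Dom \<Longrightarrow> c \<in> Fb \<Longrightarrow> d \<in> Fb \<Longrightarrow>
        wedge c d z + (\<Sum>\<beta>\<in>Bs. \<Sum>\<phi>\<in>Fb. D \<beta> \<phi> c d * wedge \<beta> \<phi> z) = 0"
    and wBB: "\<And>a b z. a \<in> Bs \<Longrightarrow> b \<in> Bs \<Longrightarrow> wedge a b z = 0"
    and indep: "\<And>r \<beta> \<phi>. (\<And>z. z \<in> Dom \<Longrightarrow> (\<Sum>\<beta>\<in>Bs. \<Sum>\<phi>\<in>Fb. r \<beta> \<phi> * wedge \<beta> \<phi> z) = 0) \<Longrightarrow>
        \<beta> \<in> Bs \<Longrightarrow> \<phi> \<in> Fb \<Longrightarrow> r \<beta> \<phi> = 0"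
    and hh: "\<And>a. h (h a) = a"
    and hA1: "\<And>a. a \<in> A1 \<Longrightarrow> h a \<in> Fb" and hFb: "\<And>a. a \<in> Fb \<Longrightarrow> h a \<in> A1"
    and hkF: "h kF = kF" and kBA1: "kB \<notin> A1" and finA1: "finite A1"
    and mapf: "\<And>u p. mapw f u = Some p \<longleftrightarrow> p \<in> lists A1 \<and> u = map h p"
    and mapg: "\<And>v q. mapw g v = Some q \<longleftrightarrow> q \<in> lists Bs \<and> v = q"
begin

lemma finFb: "finite Fb"
  by (metis finite_Aset Aset_split finite_Un)
lemma finBs: "finite Bs"
  by (metis finite_Aset Aset_split finite_Un)

lemma inj_h: "inj h"
  by (metis hh injI)

lemma iota_eq: "iota f g x (p, q) = (if p \<in> lists A1 \<and> q \<in> lists Bs then x (map h p @ q) else 0)"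
proof -
  have set: "{(u, v) \<in> supp (coprod x). mapw f u = Some p \<and> mapw g v = Some q}
      = (if p \<in> lists A1 \<and> q \<in> lists Bs \<and> x (map h p @ q) \<noteq> 0 then {(map h p, q)} else {})"
    by (auto simp: mapf mapg supp_def coprod_def)
  show ?thesis
    unfolding iota_def proj_tensor_def by (simp only: set case_prod_conv) (auto simp: coprod_def)
qed

lemma wedge_expand:
  assumes z: "z \<in> Dom"
  shows "(\<Sum>a\<in>Aset. \<Sum>b\<in>Aset. G a b * wedge a b z) =
    (\<Sum>\<beta>\<in>Bs. \<Sum>\<phi>\<in>Fb. (G \<beta> \<phi> - G \<phi> \<beta> - (\<Sum>c\<in>Fb. \<Sum>d\<in>Fb. D \<beta> \<phi> c d * G c d)) * wedge \<beta> \<phi> z)"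
proof -
  have split: "(\<Sum>a\<in>Aset. H a) = (\<Sum>a\<in>Fb. H a) + (\<Sum>a\<in>Bs. H a)" for H :: "letter \<Rightarrow> complex"
    unfolding Aset_split by (rule sum.union_disjoint[OF finFb finBs disj])
  have "(\<Sum>a\<in>Aset. \<Sum>b\<in>Aset. G a b * wedge a b z) =
     (\<Sum>a\<in>Fb. \<Sum>b\<in>Fb. G a b * wedge a b z) + (\<Sum>a\<in>Fb. \<Sum>b\<in>Bs. G a b * wedge a b z)
     + (\<Sum>a\<in>Bs. \<Sum>b\<in>Fb. G a b * wedge a b z) + (\<Sum>a\<in>Bs. \<Sum>b\<in>Bs. G a b * wedge a b z)"
    by (simp add: split sum.distrib)
  also have "(\<Sum>a\<in>Bs. \<Sum>b\<in>Bs. G a b * wedge a b z) = 0"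
    by (intro sum.neutral ballI) (simp add: wBB)
  also have "(\<Sum>a\<in>Fb. \<Sum>b\<in>Bs. G a b * wedge a b z) = (\<Sum>\<beta>\<in>Bs. \<Sum>\<phi>\<in>Fb. - (G \<phi> \<beta> * wedge \<beta> \<phi> z))"
    by (subst sum.swap) (intro sum.cong refl, subst wedge_anti, simp)
  also have "(\<Sum>a\<in>Fb. \<Sum>b\<in>Fb. G a b * wedge a b z)
      = (\<Sum>c\<in>Fb. \<Sum>d\<in>Fb. \<Sum>\<beta>\<in>Bs. \<Sum>\<phi>\<in>Fb. - (D \<beta> \<phi> c d * G c d * wedge \<beta> \<phi> z))"
  proof (intro sum.cong refl)
    fix c d assume c: "c \<in> Fb" and d: "d \<in> Fb"
    have "wedge c d z = - (\<Sum>\<beta>\<in>Bs. \<Sum>\<phi>\<in>Fb. D \<beta> \<phi> c d * wedge \<beta> \<phi> z)"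
      using wid[OF z c d] by (simp add: eq_neg_iff_add_eq_0)
    then show "G c d * wedge c d z = (\<Sum>\<beta>\<in>Bs. \<Sum>\<phi>\<in>Fb. - (D \<beta> \<phi> c d * G c d * wedge \<beta> \<phi> z))"
      by (simp add: sum_distrib_left sum_negf mult_ac)
  qed
  also have "\<dots> = (\<Sum>\<beta>\<in>Bs. \<Sum>\<phi>\<in>Fb. \<Sum>c\<in>Fb. \<Sum>d\<in>Fb. - (D \<beta> \<phi> c d * G c d * wedge \<beta> \<phi> z))"
  proof -
    let ?T = "\<lambda>c d \<beta> \<phi>. - (D \<beta> \<phi> c d * G c d * wedge \<beta> \<phi> z)"
    have "(\<Sum>c\<in>Fb. \<Sum>d\<in>Fb. \<Sum>\<beta>\<in>Bs. \<Sum>\<phi>\<in>Fb. ?T c d \<beta> \<phi>)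
        = (\<Sum>c\<in>Fb. \<Sum>\<beta>\<in>Bs. \<Sum>d\<in>Fb. \<Sum>\<phi>\<in>Fb. ?T c d \<beta> \<phi>)"
      by (rule sum.cong[OF refl], rule sum.swap)
    also have "\<dots> = (\<Sum>\<beta>\<in>Bs. \<Sum>c\<in>Fb. \<Sum>d\<in>Fb. \<Sum>\<phi>\<in>Fb. ?T c d \<beta> \<phi>)"
      by (rule sum.swap)
    also have "\<dots> = (\<Sum>\<beta>\<in>Bs. \<Sum>c\<in>Fb. \<Sum>\<phi>\<in>Fb. \<Sum>d\<in>Fb. ?T c d \<beta> \<phi>)"
      by (rule sum.cong[OF refl], rule sum.cong[OF refl], rule sum.swap)
    also have "\<dots> = (\<Sum>\<beta>\<in>Bs. \<Sum>\<phi>\<in>Fb. \<Sum>c\<in>Fb. \<Sum>d\<in>Fb. ?T c d \<beta> \<phi>)"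
      by (rule sum.cong[OF refl], rule sum.swap)
    finally show ?thesis .
  qed
  finally show ?thesis
    by (simp add: sum.distrib[symmetric] sum_subtractf left_diff_distrib sum_distrib_right sum_negf)
qed

lemma rel_B:
  assumes x: "x \<in> B_space" and \<beta>: "\<beta> \<in> Bs" and \<phi>: "\<phi> \<in> Fb"
  shows "x (u @ [\<beta>, \<phi>] @ v) = x (u @ [\<phi>, \<beta>] @ v) + (\<Sum>c\<in>Fb. \<Sum>d\<in>Fb. D \<beta> \<phi> c d * x (u @ [c, d] @ v))"
proof -
  define r where "r \<beta> \<phi> = x (u @ [\<beta>, \<phi>] @ v) - x (u @ [\<phi>, \<beta>] @ v) - (\<Sum>c\<in>Fb. \<Sum>d\<in>Fb. D \<beta> \<phi> c d * x (u @ [c, d] @ v))" for \<beta> \<phi>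
  have "r \<beta> \<phi> = 0"
  proof (rule indep[OF _ \<beta> \<phi>])
    fix z assume z: "z \<in> Dom"
    have "condK Aset (\<lambda>a b. wedge a b z) x" using x z unfolding B_space_iff by blast
    then have "(\<Sum>a\<in>Aset. \<Sum>b\<in>Aset. x (u @ [a, b] @ v) * wedge a b z) = 0" unfolding condK_def by blast
    then show "(\<Sum>\<beta>\<in>Bs. \<Sum>\<phi>\<in>Fb. r \<beta> \<phi> * wedge \<beta> \<phi> z) = 0"
      unfolding wedge_expand[OF z] r_def .
  qed
  then show ?thesis by (simp add: r_def algebra_simps)
qed

end

context fib begin

definition nB :: "letter list \<Rightarrow> nat" where "nB w = length (filter (\<lambda>a. a \<in> Bs) w)"

primrec invc :: "letter list \<Rightarrow> nat" where
  "invc [] = 0"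
| "invc (a # w) = (if a \<in> Bs then length (filter (\<lambda>b. b \<in> Fb) w) else 0) + invc w"

lemma FbBs: "a \<in> Fb \<Longrightarrow> a \<notin> Bs" using disj by blast

lemma invc_swap:
  assumes \<beta>: "\<beta> \<in> Bs" and \<phi>: "\<phi> \<in> Fb"
  shows "invc (u @ [\<phi>, \<beta>] @ v) < invc (u @ [\<beta>, \<phi>] @ v)"
proof (induction u)
  case Nil
  have "\<phi> \<notin> Bs" "\<beta> \<notin> Fb" using FbBs \<beta> \<phi> by blast+
  then show ?case using \<beta> \<phi> by simp
next
  case (Cons a u)
  then show ?case by simp
qed

lemma nB_swap: "nB (u @ [\<phi>, \<beta>] @ v) = nB (u @ [\<beta>, \<phi>] @ v)"
  by (simp add: nB_def)

lemma nB_cd: "\<beta> \<in> Bs \<Longrightarrow> c \<in> Fb \<Longrightarrow> d \<in> Fb \<Longrightarrow> nB (u @ [c, d] @ v) < nB (u @ [\<beta>, \<phi>] @ v)"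
  using FbBs by (auto simp: nB_def)

lemma dichotomy:
  "w \<in> lists Aset \<Longrightarrow> (\<exists>s q. w = s @ q \<and> s \<in> lists Fb \<and> q \<in> lists Bs) \<or>
     (\<exists>u \<beta> \<phi> v. w = u @ [\<beta>, \<phi>] @ v \<and> \<beta> \<in> Bs \<and> \<phi> \<in> Fb)"
proof (induction w)
  case Nil
  then show ?case by auto
next
  case (Cons a w)
  have a: "a \<in> Fb \<or> a \<in> Bs" using Cons.prems Aset_split by auto
  from Cons.IH Cons.prems have "(\<exists>s q. w = s @ q \<and> s \<in> lists Fb \<and> q \<in> lists Bs) \<or>
     (\<exists>u \<beta> \<phi> v. w = u @ [\<beta>, \<phi>] @ v \<and> \<beta> \<in> Bs \<and> \<phi> \<in> Fb)" by simp
  then show ?case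
  proof
    assume "\<exists>s q. w = s @ q \<and> s \<in> lists Fb \<and> q \<in> lists Bs"
    then obtain s q where w: "w = s @ q" "s \<in> lists Fb" "q \<in> lists Bs" by blast
    show ?thesis
    proof (cases "a \<in> Fb")
      case True
      then have "a # w = (a # s) @ q \<and> a # s \<in> lists Fb \<and> q \<in> lists Bs" using w by simp
      then show ?thesis by blast
    next
      case False
      with a have aB: "a \<in> Bs" by blast
      show ?thesis
      proof (cases s)
        case Nil
        then have "a # w = [] @ (a # q) \<and> [] \<in> lists Fb \<and> a # q \<in> lists Bs" using w aB by simp
        then show ?thesis by blast
      next
        case (Cons b s')
        then have "a # w = [] @ [a, b] @ (s' @ q) \<and> a \<in> Bs \<and> b \<in> Fb" using w aB by simp
        then show ?thesis by blast
      qed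
    qed
  next
    assume "\<exists>u \<beta> \<phi> v. w = u @ [\<beta>, \<phi>] @ v \<and> \<beta> \<in> Bs \<and> \<phi> \<in> Fb"
    then obtain u \<beta> \<phi> v where "w = u @ [\<beta>, \<phi>] @ v" "\<beta> \<in> Bs" "\<phi> \<in> Fb" by blast
    then have "a # w = (a # u) @ [\<beta>, \<phi>] @ v \<and> \<beta> \<in> Bs \<and> \<phi> \<in> Fb" by simp
    then show ?thesis by blast
  qed
qed

lemma uniq:
  assumes out: "\<And>w. w \<notin> lists Aset \<Longrightarrow> d w = 0"
    and rel: "\<And>u v \<beta> \<phi>. \<beta> \<in> Bs \<Longrightarrow> \<phi> \<in> Fb \<Longrightarrow>
       d (u @ [\<beta>, \<phi>] @ v) = d (u @ [\<phi>, \<beta>] @ v) + (\<Sum>c\<in>Fb. \<Sum>e\<in>Fb. D \<beta> \<phi> c e * d (u @ [c, e] @ v))"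
    and srt: "\<And>s q. s \<in> lists Fb \<Longrightarrow> q \<in> lists Bs \<Longrightarrow> d (s @ q) = 0"
  shows "d w = 0"
proof -
  have "\<forall>w. nB w = n \<longrightarrow> d w = 0" for n
  proof (induction n rule: less_induct)
    case (less n)
    note IHn = less.IH
    have "\<forall>w. nB w = n \<longrightarrow> invc w = m \<longrightarrow> d w = 0" for m
    proof (induction m rule: less_induct)
      case (less m)
      note IHm = less.IH
      show ?case
      proof (intro allI impI)
        fix w assume n: "nB w = n" and m: "invc w = m"
        show "d w = 0"
        proof (cases "w \<in> lists Aset")
          case False then show ?thesis by (rule out)
        next
          case True
          from dichotomy[OF True] show ?thesis
          proof
            assume "\<exists>s q. w = s @ q \<and> s \<in> lists Fb \<and> q \<in> lists Bs"
            then show ?thesis using srt by blast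
          next
            assume "\<exists>u \<beta> \<phi> v. w = u @ [\<beta>, \<phi>] @ v \<and> \<beta> \<in> Bs \<and> \<phi> \<in> Fb"
            then obtain u \<beta> \<phi> v where w: "w = u @ [\<beta>, \<phi>] @ v" and \<beta>: "\<beta> \<in> Bs" and \<phi>: "\<phi> \<in> Fb" by blast
            have 1: "d (u @ [\<phi>, \<beta>] @ v) = 0"
              using IHm[OF _, rule_format, of "invc (u @ [\<phi>, \<beta>] @ v)" "u @ [\<phi>, \<beta>] @ v"]
                invc_swap[OF \<beta> \<phi>, of u v] nB_swap[of u \<phi> \<beta> v] n m w by simp
            have 2: "d (u @ [c, e] @ v) = 0" if "c \<in> Fb" "e \<in> Fb" for c e
              using IHn[rule_format, of "nB (u @ [c, e] @ v)" "u @ [c, e] @ v"]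
                nB_cd[OF \<beta> that, of u v \<phi>] n w by simp
            show ?thesis using rel[OF \<beta> \<phi>, of u v] 1 2 w by simp
          qed
        qed
      qed
    qed
    then show ?case by blast
  qed
  then show ?thesis by blast
qed

lemma B0_B: "x \<in> B0_space \<Longrightarrow> x \<in> B_space" by (simp add: B0_space_def)

lemma B0_fin: "x \<in> B0_space \<Longrightarrow> finite (supp x)"
  by (simp add: B0_space_def B_space_iff S_space_def)

lemma B0_lists: "x \<in> B0_space \<Longrightarrow> w \<notin> lists Aset \<Longrightarrow> x w = 0"
  unfolding B0_space_def B_space_iff S_space_def supp_def by blast

lemma B0_S0: "x \<in> B0_space \<Longrightarrow> \<not> S0word w \<Longrightarrow> x w = 0"
  unfolding B0_space_def supp_def by blast

lemma kF_commute:
  assumes x: "x \<in> B_space"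
  shows "q \<in> lists Bs \<Longrightarrow> x (u @ [kF] @ q) = x (u @ q @ [kF])"
proof (induction q arbitrary: u)
  case Nil
  then show ?case by simp
next
  case (Cons \<beta> q)
  have \<beta>: "\<beta> \<in> Bs" and q: "q \<in> lists Bs" using Cons.prems by auto
  have "x (u @ [kF] @ \<beta> # q) = x (u @ [\<beta>, kF] @ q)"
    using rel_B[OF x \<beta> kF, of u q] by (simp add: DkF)
  also have "\<dots> = x ((u @ [\<beta>]) @ [kF] @ q)" by simp
  also have "\<dots> = x ((u @ [\<beta>]) @ q @ [kF])" by (rule Cons.IH[OF q])
  finally show ?case by simp
qed

lemma kF_last: "last w = kF \<Longrightarrow> w \<noteq> [] \<Longrightarrow> \<not> S0word w"
  using kk by (auto simp: S0word_def doubleton_eq_iff)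

lemma kB_last: "last w = kB \<Longrightarrow> w \<noteq> [] \<Longrightarrow> \<not> S0word w"
  using kk by (auto simp: S0word_def doubleton_eq_iff)

lemma B0_kF_mid: "x \<in> B0_space \<Longrightarrow> q \<in> lists Bs \<Longrightarrow> x (u @ [kF] @ q) = 0"
  using kF_commute[OF B0_B] B0_S0 kF_last by (metis append_is_Nil_conv last_appendR last_snoc not_Cons_self2)

lemma comp_hh: "h \<circ> h = id"
  by (rule ext) (simp add: hh)

lemma map_hh: "map h (map h p) = p"
  by (simp add: comp_hh)

lemma map_h_A1: "p \<in> lists A1 \<Longrightarrow> map h p \<in> lists Fb"
  using hA1 by auto

lemma map_h_Fb: "p \<in> lists Fb \<Longrightarrow> map h p \<in> lists A1"
  using hFb by auto

lemma iota_T0: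
  assumes x: "x \<in> B0_space"
  shows "iota f g x \<in> tensor_S0 A1 Bs"
proof -
  define N where "N = Max (length ` supp x)"
  have fx: "finite (supp x)" using B0_fin[OF x] .
  have sub: "supp (iota f g x) \<subseteq> {p. set p \<subseteq> A1 \<and> length p \<le> N} \<times> {q. set q \<subseteq> Bs \<and> length q \<le> N}"
  proof
    fix pq assume pq: "pq \<in> supp (iota f g x)"
    obtain p q where pq_eq: "pq = (p, q)" by (cases pq)
    have c: "p \<in> lists A1" "q \<in> lists Bs" "x (map h p @ q) \<noteq> 0"
      using pq unfolding pq_eq supp_def by (auto simp: iota_eq split: if_splits)
    have "map h p @ q \<in> supp x" using c(3) by (simp add: supp_def)
    then have "length (map h p @ q) \<le> N" unfolding N_def
      by (rule Max_ge[OF finite_imageI[OF fx] imageI])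
    then show "pq \<in> {p. set p \<subseteq> A1 \<and> length p \<le> N} \<times> {q. set q \<subseteq> Bs \<and> length q \<le> N}"
      using c unfolding pq_eq by auto
  qed
  have fin: "finite (supp (iota f g x))"
    by (rule finite_subset[OF sub]) (use finA1 finBs finite_lists_length_le in blast)
  have cond: "p \<in> lists A1 \<and> S0word p \<and> q \<in> lists Bs \<and> S0word q" if pq: "(p, q) \<in> supp (iota f g x)" for p q
  proof -
    have c: "p \<in> lists A1" "q \<in> lists Bs" "x (map h p @ q) \<noteq> 0"
      using pq unfolding supp_def by (auto simp: iota_eq split: if_splits)
    have Sp: "S0word p"
    proof (rule ccontr)
      assume "\<not> S0word p"
      then have p: "p \<noteq> []" "last p \<in> {Z1, Z2}" by (auto simp: S0word_def)
      have "last p \<in> A1" using p(1) c(1) by (metis in_listsD last_in_set)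
      then have lp: "last p = kF" using p(2) kk kBA1 by auto
      have lm: "last (map h p) = kF" using p(1) lp hkF by (simp add: last_map)
      show False
      proof (cases "q = []")
        case True
        then show False using c(3) B0_S0[OF x] kF_last[OF lm] p(1) by simp
      next
        case False
        obtain u where "map h p = u @ [kF]" using lm p(1)
          by (metis append_butlast_last_id list.map_disc_iff)
        then show False using c B0_kF_mid[OF x c(2), of u] by simp
      qed
    qed
    have Sq: "S0word q"
    proof (rule ccontr)
      assume "\<not> S0word q"
      then have q: "q \<noteq> []" "last q \<in> {Z1, Z2}" by (auto simp: S0word_def)
      have "last q \<in> Bs" using q(1) c(2) by (metis in_listsD last_in_set)
      then have lq: "last q = kB" using q(2) kk kF FbBs by auto
      have "last (map h p @ q) = kB" using q(1) lq by simp
      then show False using c(3) B0_S0[OF x] kB_last q(1) by simp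
    qed
    show ?thesis using c Sp Sq by blast
  qed
  show ?thesis unfolding tensor_S0_def using fin cond by blast
qed

lemma iota_inj:
  assumes x: "x \<in> B0_space" and y: "y \<in> B0_space" and eq: "iota f g x = iota f g y"
  shows "x = y"
proof -
  have "(\<lambda>w. x w - y w) w = 0" for w
  proof (rule uniq)
    fix w :: "letter list" assume w: "w \<notin> lists Aset"
    then show "x w - y w = 0" using B0_lists[OF x w] B0_lists[OF y w] by simp
  next
    fix u v \<beta> \<phi> assume \<beta>: "\<beta> \<in> Bs" and \<phi>: "\<phi> \<in> Fb"
    show "x (u @ [\<beta>, \<phi>] @ v) - y (u @ [\<beta>, \<phi>] @ v) =
       x (u @ [\<phi>, \<beta>] @ v) - y (u @ [\<phi>, \<beta>] @ v) +
       (\<Sum>c\<in>Fb. \<Sum>e\<in>Fb. D \<beta> \<phi> c e * (x (u @ [c, e] @ v) - y (u @ [c, e] @ v)))"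
      using rel_B[OF B0_B[OF x] \<beta> \<phi>, of u v] rel_B[OF B0_B[OF y] \<beta> \<phi>, of u v]
      by (simp add: right_diff_distrib sum_subtractf)
  next
    fix s q assume s: "s \<in> lists Fb" and q: "q \<in> lists Bs"
    have "iota f g x (map h s, q) = iota f g y (map h s, q)" using eq by simp
    then show "x (s @ q) - y (s @ q) = 0"
      using map_h_Fb[OF s] q by (simp add: iota_eq comp_hh)
  qed
  then show ?thesis by auto
qed

end

context fib begin

definition tr :: "letter \<Rightarrow> tens \<Rightarrow> tens" where
  "tr a Y = (\<lambda>(p, q). if a \<in> Fb then Y (a # p, q)
     else if a \<in> Bs then Y (p, a # q) +
       (\<Sum>i<length p. \<Sum>c\<in>Fb. \<Sum>d\<in>Fb. D a (p ! i) c d * Y (take i p @ [c, d] @ drop (Suc i) p, q))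
     else 0)"

primrec evl :: "tens \<Rightarrow> letter list \<Rightarrow> complex" where
  "evl Y [] = Y ([], [])"
| "evl Y (a # w) = evl (tr a Y) w"

primrec trs :: "letter list \<Rightarrow> tens \<Rightarrow> tens" where
  "trs [] Y = Y"
| "trs (a # u) Y = trs u (tr a Y)"

lemma tr_Fb: "a \<in> Fb \<Longrightarrow> tr a Y (p, q) = Y (a # p, q)"
  by (simp add: tr_def)

lemma tr_Bs: "a \<in> Bs \<Longrightarrow> tr a Y (p, q) = Y (p, a # q) +
       (\<Sum>i<length p. \<Sum>c\<in>Fb. \<Sum>d\<in>Fb. D a (p ! i) c d * Y (take i p @ [c, d] @ drop (Suc i) p, q))"
  using FbBs by (auto simp: tr_def)

lemma tr_out: "a \<notin> Aset \<Longrightarrow> tr a Y (p, q) = 0"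
  using Aset_split by (auto simp: tr_def)

lemma tr_add: "tr a (\<lambda>pq. Y1 pq + Y2 pq) = (\<lambda>pq. tr a Y1 pq + tr a Y2 pq)"
  by (rule ext) (auto simp: tr_def sum.distrib distrib_left)

lemma tr_scale: "tr a (\<lambda>pq. k * Y pq) = (\<lambda>pq. k * tr a Y pq)"
  by (rule ext) (auto simp: tr_def sum_distrib_left distrib_left mult_ac)

lemma tr_zero: "tr a (\<lambda>pq. 0) = (\<lambda>pq. 0)"
  by (rule ext) (auto simp: tr_def)

lemma evl_add: "evl (\<lambda>pq. Y1 pq + Y2 pq) w = evl Y1 w + evl Y2 w"
  by (induction w arbitrary: Y1 Y2) (simp_all add: tr_add)

lemma evl_scale: "evl (\<lambda>pq. k * Y pq) w = k * evl Y w"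
  by (induction w arbitrary: Y) (simp_all add: tr_scale)

lemma evl_zero: "evl (\<lambda>pq. 0) w = 0"
  by (induction w) (simp_all add: tr_zero)

lemma evl_sum: "finite I \<Longrightarrow> evl (\<lambda>pq. \<Sum>i\<in>I. k i * Y i pq) w = (\<Sum>i\<in>I. k i * evl (Y i) w)"
proof (induction I rule: finite_induct)
  case empty
  then show ?case by (simp add: evl_zero)
next
  case (insert x F)
  have "evl (\<lambda>pq. \<Sum>i\<in>insert x F. k i * Y i pq) w = evl (\<lambda>pq. k x * Y x pq + (\<Sum>i\<in>F. k i * Y i pq)) w"
    using insert.hyps by simp
  also have "\<dots> = k x * evl (Y x) w + evl (\<lambda>pq. \<Sum>i\<in>F. k i * Y i pq) w"
    by (simp add: evl_add evl_scale)
  finally show ?case using insert by simp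
qed

lemma evl_append: "evl Y (u @ w) = evl (trs u Y) w"
  by (induction u arbitrary: Y) simp_all

lemma evl_Bs: "q \<in> lists Bs \<Longrightarrow> evl Y q = Y ([], q)"
proof (induction q arbitrary: Y)
  case Nil then show ?case by simp
next
  case (Cons \<beta> q)
  then show ?case by (simp add: tr_Bs)
qed

lemma evl_sorted: "s \<in> lists Fb \<Longrightarrow> q \<in> lists Bs \<Longrightarrow> evl Y (s @ q) = Y (s, q)"
proof (induction s arbitrary: Y)
  case Nil then show ?case by (simp add: evl_Bs)
next
  case (Cons \<phi> s)
  then show ?case by (simp add: tr_Fb)
qed

lemma evl_out: "w \<notin> lists Aset \<Longrightarrow> evl Y w = 0"
proof (induction w arbitrary: Y)
  case Nil then show ?case by simp
next
  case (Cons a w)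
  show ?case
  proof (cases "a \<in> Aset")
    case True
    then show ?thesis using Cons by simp
  next
    case False
    then have "tr a Y = (\<lambda>pq. 0)" by (auto simp: tr_out)
    then show ?thesis by (simp add: evl_zero)
  qed
qed

lemma evl_len: "(\<And>p q. length p + length q = length w \<Longrightarrow> Y (p, q) = 0) \<Longrightarrow> evl Y w = 0"
proof (induction w arbitrary: Y)
  case Nil then show ?case by simp
next
  case (Cons a w)
  have "tr a Y (p, q) = 0" if "length p + length q = length w" for p q
  proof -
    have z: "Y (p', q') = 0" if "length p' + length q' = Suc (length w)" for p' q'
      using Cons.prems that by simp
    have s0: "Y (take i p @ c # d # drop (Suc i) p, q) = 0" if i: "i < length p" for i c d
    proof (rule z)
      show "length (take i p @ c # d # drop (Suc i) p) + length q = Suc (length w)"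
        using i \<open>length p + length q = length w\<close> by simp
    qed
    have s: "(\<Sum>i<length p. \<Sum>c\<in>Fb. \<Sum>d\<in>Fb. D a (p ! i) c d * Y (take i p @ [c, d] @ drop (Suc i) p, q)) = 0"
      by (intro sum.neutral ballI) (simp add: s0)
    show ?thesis
      using z[of "a # p" q] z[of p "a # q"] s that by (auto simp: tr_def)
  qed
  then show ?case using Cons.IH[of "tr a Y"] by simp
qed

definition NN :: "letter list \<Rightarrow> letter list \<Rightarrow> bool" where
  "NN p q \<longleftrightarrow> (p \<noteq> [] \<and> last p = kF) \<or> (q \<noteq> [] \<and> last q = kB)"

lemma tr_NN:
  assumes Y: "\<And>p q. NN p q \<Longrightarrow> Y (p, q) = 0" and pq: "NN p q"
  shows "tr a Y (p, q) = 0"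
proof -
  consider "a \<in> Fb" | "a \<in> Bs" | "a \<notin> Aset" using Aset_split by blast
  then show ?thesis
  proof cases
    case 1
    have "NN (a # p) q" using pq by (auto simp: NN_def)
    then show ?thesis using 1 Y by (simp add: tr_Fb)
  next
    case 2
    have 1: "NN p (a # q)" using pq by (auto simp: NN_def)
    have 3: "D a (p ! i) c d * Y (take i p @ c # d # drop (Suc i) p, q) = 0"
      if i: "i < length p" for i c d
    proof (cases "q \<noteq> [] \<and> last q = kB")
      case True
      then have "NN (take i p @ [c, d] @ drop (Suc i) p) q" by (simp add: NN_def)
      then show ?thesis using Y by simp
    next
      case False
      then have p: "p \<noteq> []" "last p = kF" using pq by (auto simp: NN_def)
      show ?thesis
      proof (cases "Suc i = length p")
        case True
        then have "p ! i = kF" using p by (metis diff_Suc_1 last_conv_nth)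
        then show ?thesis by (simp add: DkF)
      next
        case False
        then have "drop (Suc i) p \<noteq> []" using i by simp
        then have "last (take i p @ [c, d] @ drop (Suc i) p) = last p" by simp
        then have "NN (take i p @ [c, d] @ drop (Suc i) p) q" using p by (simp add: NN_def)
        then show ?thesis using Y by simp
      qed
    qed
    have "(\<Sum>i<length p. \<Sum>c\<in>Fb. \<Sum>d\<in>Fb. D a (p ! i) c d * Y (take i p @ c # d # drop (Suc i) p, q)) = 0"
      by (intro sum.neutral ballI) (use 3 in simp)
    then show ?thesis using 2 Y[OF 1] by (simp add: tr_Bs)
  next
    case 3
    then show ?thesis by (simp add: tr_out)
  qed
qed

lemma trs_NN: "(\<And>p q. NN p q \<Longrightarrow> Y (p, q) = 0) \<Longrightarrow> NN p q \<Longrightarrow> trs u Y (p, q) = 0"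
proof (induction u arbitrary: Y)
  case Nil then show ?case by simp
next
  case (Cons a u)
  have "\<And>p q. NN p q \<Longrightarrow> tr a Y (p, q) = 0" using tr_NN Cons.prems(1) by blast
  then show ?case using Cons.IH Cons.prems(2) by simp
qed

lemma evl_last:
  assumes Y: "\<And>p q. NN p q \<Longrightarrow> Y (p, q) = 0" and w: "w \<noteq> []" "last w \<in> {kF, kB}"
  shows "evl Y w = 0"
proof -
  obtain w' a where wa: "w = w' @ [a]" using w(1) by (metis append_butlast_last_id)
  have a: "a = kF \<or> a = kB" using w(2) wa by simp
  define Z where "Z = trs w' Y"
  have Z: "\<And>p q. NN p q \<Longrightarrow> Z (p, q) = 0" unfolding Z_def using trs_NN Y by blast
  have "evl Y w = tr a Z ([], [])" by (simp add: wa evl_append Z_def)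
  also have "\<dots> = 0"
  proof (cases "a = kF")
    case True
    then show ?thesis using Z[of "[kF]" "[]"] kF by (simp add: tr_Fb NN_def)
  next
    case False
    then have "a = kB" using a by blast
    then show ?thesis using Z[of "[]" "[kB]"] kB by (simp add: tr_Bs NN_def)
  qed
  finally show ?thesis .
qed

lemma tr_coef:
  assumes \<beta>: "\<beta> \<in> Bs" and \<phi>: "\<phi> \<in> Fb"
  shows "tr \<phi> (tr \<beta> U) (p, q) - tr \<beta> (tr \<phi> U) (p, q)
     - (\<Sum>c\<in>Fb. \<Sum>d\<in>Fb. D \<beta> \<phi> c d * tr d (tr c U) (p, q)) = 0"
proof -
  define S where "S = (\<Sum>i<length p. \<Sum>c\<in>Fb. \<Sum>d\<in>Fb. D \<beta> (p ! i) c d * U (\<phi> # (take i p @ [c, d] @ drop (Suc i) p), q))"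
  define F where "F i = (\<Sum>c\<in>Fb. \<Sum>d\<in>Fb. D \<beta> ((\<phi> # p) ! i) c d * U (take i (\<phi> # p) @ [c, d] @ drop (Suc i) (\<phi> # p), q))" for i
  have "tr \<phi> (tr \<beta> U) (p, q) = tr \<beta> U (\<phi> # p, q)" by (simp add: tr_Fb \<phi>)
  also have "\<dots> = U (\<phi> # p, \<beta> # q) + (\<Sum>i<length (\<phi> # p). F i)"
    unfolding F_def by (subst tr_Bs[OF \<beta>]) (rule refl)
  also have "(\<Sum>i<length (\<phi> # p). F i) = F 0 + (\<Sum>i<length p. F (Suc i))"
    by (simp only: length_Cons sum.lessThan_Suc_shift)
  also have "F 0 = (\<Sum>c\<in>Fb. \<Sum>d\<in>Fb. D \<beta> \<phi> c d * U (c # d # p, q))"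
    by (simp add: F_def)
  also have "(\<Sum>i<length p. F (Suc i)) = S"
    by (simp add: F_def S_def)
  finally have 1: "tr \<phi> (tr \<beta> U) (p, q) = U (\<phi> # p, \<beta> # q) + (\<Sum>c\<in>Fb. \<Sum>d\<in>Fb. D \<beta> \<phi> c d * U (c # d # p, q)) + S"
    by simp
  have 2: "tr \<beta> (tr \<phi> U) (p, q) = U (\<phi> # p, \<beta> # q) + S"
    using \<beta> \<phi> by (simp add: tr_Fb tr_Bs S_def)
  have 3: "(\<Sum>c\<in>Fb. \<Sum>d\<in>Fb. D \<beta> \<phi> c d * tr d (tr c U) (p, q)) = (\<Sum>c\<in>Fb. \<Sum>d\<in>Fb. D \<beta> \<phi> c d * U (c # d # p, q))"
    by (intro sum.cong refl) (simp add: tr_Fb)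
  show ?thesis unfolding 1 2 3 by simp
qed

lemma evl_chen:
  assumes z: "z \<in> Dom"
  shows "(\<Sum>a\<in>Aset. \<Sum>b\<in>Aset. evl Y (u @ [a, b] @ v) * wedge a b z) = 0"
proof -
  define U where "U = trs u Y"
  have e: "evl Y (u @ [a, b] @ v) = evl (tr b (tr a U)) v" for a b
    by (simp add: evl_append U_def)
  have "(\<Sum>a\<in>Aset. \<Sum>b\<in>Aset. evl Y (u @ [a, b] @ v) * wedge a b z)
      = (\<Sum>a\<in>Aset. \<Sum>b\<in>Aset. wedge a b z * evl (tr b (tr a U)) v)"
    by (intro sum.cong refl) (simp only: e mult.commute)
  also have "\<dots> = (\<Sum>ab\<in>Aset \<times> Aset. wedge (fst ab) (snd ab) z * evl (tr (snd ab) (tr (fst ab) U)) v)"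
    by (simp add: sum.cartesian_product case_prod_beta)
  also have "\<dots> = evl (\<lambda>pq. \<Sum>ab\<in>Aset \<times> Aset. wedge (fst ab) (snd ab) z * tr (snd ab) (tr (fst ab) U) pq) v"
    by (rule evl_sum[symmetric]) (simp add: finite_Aset)
  also have "(\<lambda>pq. \<Sum>ab\<in>Aset \<times> Aset. wedge (fst ab) (snd ab) z * tr (snd ab) (tr (fst ab) U) pq) = (\<lambda>pq. 0)"
  proof
    fix pq :: "letter list \<times> letter list"
    obtain p q where pq: "pq = (p, q)" by (cases pq)
    have "(\<Sum>ab\<in>Aset \<times> Aset. wedge (fst ab) (snd ab) z * tr (snd ab) (tr (fst ab) U) pq)
        = (\<Sum>a\<in>Aset. \<Sum>b\<in>Aset. tr b (tr a U) (p, q) * wedge a b z)"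
      by (simp add: pq sum.cartesian_product case_prod_beta mult_ac)
    also have "\<dots> = 0"
      unfolding wedge_expand[OF z] using tr_coef by simp
    finally show "(\<Sum>ab\<in>Aset \<times> Aset. wedge (fst ab) (snd ab) z * tr (snd ab) (tr (fst ab) U) pq) = 0" .
  qed
  finally show ?thesis by (simp add: evl_zero)
qed

end

definition srt :: "letter set \<Rightarrow> letter set \<Rightarrow> letter list \<Rightarrow> bool" where
  "srt F B u \<longleftrightarrow> (\<exists>s q. u = s @ q \<and> s \<in> lists F \<and> q \<in> lists B)"

lemma shw_srt:
  assumes "q \<in> lists B"
  shows "s \<in> lists F \<Longrightarrow> shw u v (s @ q) \<noteq> 0 \<Longrightarrow> srt F B u"
proof (induction s arbitrary: u v)
  case Nil
  then have "set u \<subseteq> B" using assms shw_set[OF Nil.prems(2)] by auto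
  then have "u = [] @ u \<and> [] \<in> lists F \<and> u \<in> lists B" by auto
  then show ?case unfolding srt_def by blast
next
  case (Cons c s)
  have c: "c \<in> F" and s: "s \<in> lists F" using Cons.prems by auto
  have ne: "(case u of [] \<Rightarrow> 0 | a # u' \<Rightarrow> if a = c then shw u' v (s @ q) else 0) +
       (case v of [] \<Rightarrow> 0 | b # v' \<Rightarrow> if b = c then shw u v' (s @ q) else 0) \<noteq> 0"
    using Cons.prems(2) by simp
  show ?case
  proof (cases "(case u of [] \<Rightarrow> 0 | a # u' \<Rightarrow> if a = c then shw u' v (s @ q) else 0) \<noteq> 0")
    case True
    then obtain u' where u: "u = c # u'" "shw u' v (s @ q) \<noteq> 0" by (auto split: list.splits if_splits)
    from Cons.IH[OF s u(2)] obtain s1 q1 where "u' = s1 @ q1" "s1 \<in> lists F" "q1 \<in> lists B"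
      unfolding srt_def by blast
    then have "u = (c # s1) @ q1 \<and> c # s1 \<in> lists F \<and> q1 \<in> lists B" using u c by simp
    then show ?thesis unfolding srt_def by blast
  next
    case False
    with ne have "(case v of [] \<Rightarrow> 0 | b # v' \<Rightarrow> if b = c then shw u v' (s @ q) else 0) \<noteq> 0" by simp
    then obtain v' where "v = c # v'" "shw u v' (s @ q) \<noteq> 0" by (auto split: list.splits if_splits)
    then show ?thesis using Cons.IH[OF s] by blast
  qed
qed

lemma case_srt:
  assumes "F \<inter> B = {}" "s1 \<in> lists F" "q1 \<in> lists B" "c \<in> F"
  shows "(case s1 @ q1 of [] \<Rightarrow> 0 | a # r \<Rightarrow> if a = c then X r else (0::complex)) =
         (case s1 of [] \<Rightarrow> 0 | a # s1' \<Rightarrow> if a = c then X (s1' @ q1) else 0)"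
  using assms by (cases s1; cases q1) auto

lemma shw_srt_split:
  assumes FB: "F \<inter> B = {}" and q: "q \<in> lists B" "q1 \<in> lists B" "q2 \<in> lists B"
  shows "s \<in> lists F \<Longrightarrow> s1 \<in> lists F \<Longrightarrow> s2 \<in> lists F \<Longrightarrow>
     shw (s1 @ q1) (s2 @ q2) (s @ q) = shw s1 s2 s * shw q1 q2 q"
proof (induction s arbitrary: s1 s2)
  case Nil
  show ?case
  proof (cases "s1 = [] \<and> s2 = []")
    case True then show ?thesis by simp
  next
    case False
    have "shw (s1 @ q1) (s2 @ q2) q = 0"
    proof (rule ccontr)
      assume "shw (s1 @ q1) (s2 @ q2) q \<noteq> 0"
      then have "set s1 \<union> set s2 \<subseteq> B" using shw_set q by fastforce
      moreover have "set s1 \<union> set s2 \<subseteq> F" using Nil.prems by auto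
      ultimately have "s1 = [] \<and> s2 = []" using FB
        by (metis Int_subset_iff Un_subset_iff set_empty subset_empty)
      then show False using False by simp
    qed
    then show ?thesis using False by auto
  qed
next
  case (Cons c s)
  have c: "c \<in> F" and s: "s \<in> lists F" using Cons.prems by auto
  have e1: "(case s1 @ q1 of [] \<Rightarrow> 0 | a # r \<Rightarrow> if a = c then shw r (s2 @ q2) (s @ q) else 0) =
         (case s1 of [] \<Rightarrow> 0 | a # s1' \<Rightarrow> if a = c then shw (s1' @ q1) (s2 @ q2) (s @ q) else 0)"
    by (rule case_srt[OF FB Cons.prems(2) q(2) c])
  have e2: "(case s2 @ q2 of [] \<Rightarrow> 0 | b # r \<Rightarrow> if b = c then shw (s1 @ q1) r (s @ q) else 0) =
         (case s2 of [] \<Rightarrow> 0 | b # s2' \<Rightarrow> if b = c then shw (s1 @ q1) (s2' @ q2) (s @ q) else 0)"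
    by (rule case_srt[OF FB Cons.prems(3) q(3) c])
  have "shw (s1 @ q1) (s2 @ q2) ((c # s) @ q) =
      (case s1 of [] \<Rightarrow> 0 | a # s1' \<Rightarrow> if a = c then shw (s1' @ q1) (s2 @ q2) (s @ q) else 0) +
      (case s2 of [] \<Rightarrow> 0 | b # s2' \<Rightarrow> if b = c then shw (s1 @ q1) (s2' @ q2) (s @ q) else 0)"
    using e1 e2 by simp
  also have "\<dots> = shw s1 s2 (c # s) * shw q1 q2 q"
  proof -
    have IH: "\<And>a b. a \<in> lists F \<Longrightarrow> b \<in> lists F \<Longrightarrow> shw (a @ q1) (b @ q2) (s @ q) = shw a b s * shw q1 q2 q"
      using Cons.IH[OF s] by blast
    have IH0: "\<And>b. b \<in> lists F \<Longrightarrow> shw q1 (b @ q2) (s @ q) = shw [] b s * shw q1 q2 q"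
      using IH[of "[]"] by simp
    have IH0': "\<And>a. a \<in> lists F \<Longrightarrow> shw (a @ q1) q2 (s @ q) = shw a [] s * shw q1 q2 q"
      using IH[of _ "[]"] by simp
    have IH1: "\<And>a b l. a \<in> lists F \<Longrightarrow> b \<in> F \<Longrightarrow> l \<in> lists F \<Longrightarrow>
        shw (a @ q1) (b # l @ q2) (s @ q) = shw a (b # l) s * shw q1 q2 q"
      using IH[of _ "_ # _"] by simp
    have IH2: "\<And>a b l. a \<in> lists F \<Longrightarrow> b \<in> F \<Longrightarrow> l \<in> lists F \<Longrightarrow>
        shw (b # l @ q1) (a @ q2) (s @ q) = shw (b # l) a s * shw q1 q2 q"
      using IH[of "_ # _"] by simp
    show ?thesis
      using Cons.prems by (cases s1; cases s2) (auto simp: distrib_right IH IH0 IH0' IH1 IH2)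
  qed
  finally show ?case by simp
qed

context fib begin

lemma srt_iff: "srt Fb Bs u \<longleftrightarrow> (\<exists>s1 q1. u = s1 @ q1 \<and> s1 \<in> lists Fb \<and> q1 \<in> lists Bs)"
  by (simp add: srt_def)

lemma iota_mult:
  assumes x: "x \<in> B0_space" and y: "y \<in> B0_space"
  shows "iota f g (shuffle x y) = tshuffle (iota f g x) (iota f g y)"
proof (rule ext, clarify)
  fix p q
  define X1 where "X1 = iota f g x"
  define X2 where "X2 = iota f g y"
  have fx: "finite (supp x)" and fy: "finite (supp y)" using B0_fin x y by auto
  have sX1: "p1 \<in> lists A1 \<and> q1 \<in> lists Bs \<and> x (map h p1 @ q1) \<noteq> 0" if "(p1, q1) \<in> supp X1" for p1 q1
    using that by (auto simp: X1_def supp_def iota_eq split: if_splits)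
  have sX2: "p1 \<in> lists A1 \<and> q1 \<in> lists Bs \<and> y (map h p1 @ q1) \<noteq> 0" if "(p1, q1) \<in> supp X2" for p1 q1
    using that by (auto simp: X2_def supp_def iota_eq split: if_splits)
  show "iota f g (shuffle x y) (p, q) = tshuffle X1 X2 (p, q)"
  proof (cases "p \<in> lists A1 \<and> q \<in> lists Bs")
    case False
    have "\<forall>t\<in>supp X1 \<times> supp X2. (\<lambda>((u1, v1), (u2, v2)). X1 (u1, v1) * X2 (u2, v2) * shw u1 u2 p * shw v1 v2 q) t = 0"
    proof
      fix t assume t: "t \<in> supp X1 \<times> supp X2"
      obtain p1 q1 p2 q2 where tt: "t = ((p1, q1), (p2, q2))" by (metis prod.collapse)
      have t12: "(p1, q1) \<in> supp X1" "(p2, q2) \<in> supp X2" using t unfolding tt by auto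
      have a: "p1 \<in> lists A1" "q1 \<in> lists Bs" "p2 \<in> lists A1" "q2 \<in> lists Bs"
        using sX1[OF t12(1)] sX2[OF t12(2)] by auto
      have "shw p1 p2 p * shw q1 q2 q = 0"
      proof (rule ccontr)
        assume "shw p1 p2 p * shw q1 q2 q \<noteq> 0"
        then have "shw p1 p2 p \<noteq> 0" "shw q1 q2 q \<noteq> 0" by auto
        then have "set p = set p1 \<union> set p2" "set q = set q1 \<union> set q2" using shw_set by blast+
        then have "p \<in> lists A1 \<and> q \<in> lists Bs" using a by auto
        then show False using False by simp
      qed
      then show "(\<lambda>((u1, v1), (u2, v2)). X1 (u1, v1) * X2 (u2, v2) * shw u1 u2 p * shw v1 v2 q) t = 0"
        unfolding tt by simp
    qed
    then have "tshuffle X1 X2 (p, q) = 0"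
      by (simp only: tshuffle_def case_prod_conv) (rule sum.neutral)
    then show ?thesis using False by (auto simp: iota_eq X1_def X2_def)
  next
    case True
    then have p: "p \<in> lists A1" and q: "q \<in> lists Bs" by auto
    have sp: "map h p \<in> lists Fb" using map_h_A1[OF p] .
    define P where "P = {uv \<in> supp x \<times> supp y. srt Fb Bs (fst uv) \<and> srt Fb Bs (snd uv)}"
    define k where "k = (\<lambda>((p1, q1), (p2, q2)). (map h p1 @ q1, map h p2 @ q2))"
    define G where "G = (\<lambda>(u, v). x u * y v * shw u v (map h p @ q))"
    have "iota f g (shuffle x y) (p, q) = shuffle x y (map h p @ q)"
      using True by (simp add: iota_eq)
    also have "\<dots> = (\<Sum>uv\<in>supp x \<times> supp y. G uv)"
      unfolding shuffle_def G_def ..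
    also have "\<dots> = (\<Sum>uv\<in>P. G uv)"
    proof (rule sum.mono_neutral_right)
      show "finite (supp x \<times> supp y)" using fx fy by simp
      show "P \<subseteq> supp x \<times> supp y" by (auto simp: P_def)
      show "\<forall>uv\<in>supp x \<times> supp y - P. G uv = 0"
      proof
        fix uv assume uv: "uv \<in> supp x \<times> supp y - P"
        obtain u v where uv_eq: "uv = (u, v)" by (cases uv)
        show "G uv = 0"
        proof (rule ccontr)
          assume "G uv \<noteq> 0"
          then have "shw u v (map h p @ q) \<noteq> 0" by (simp add: G_def uv_eq)
          then have "srt Fb Bs u" "srt Fb Bs v"
            using shw_srt[OF q sp] shw_srt[OF q sp, of v u] shw_comm by metis+
          then show False using uv by (auto simp: P_def uv_eq)
        qed
      qed
    qed
    also have "P = k ` (supp X1 \<times> supp X2)"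
    proof
      show "k ` (supp X1 \<times> supp X2) \<subseteq> P"
      proof
        fix t assume "t \<in> k ` (supp X1 \<times> supp X2)"
        then obtain p1 q1 p2 q2 where t: "t = k ((p1, q1), (p2, q2))" "(p1, q1) \<in> supp X1" "(p2, q2) \<in> supp X2"
          by auto
        have a: "p1 \<in> lists A1 \<and> q1 \<in> lists Bs \<and> x (map h p1 @ q1) \<noteq> 0"
          "p2 \<in> lists A1 \<and> q2 \<in> lists Bs \<and> y (map h p2 @ q2) \<noteq> 0"
          using sX1[OF t(2)] sX2[OF t(3)] by auto
        then show "t \<in> P" unfolding t(1) k_def P_def srt_def using map_h_A1
          by (auto simp: supp_def)
      qed
    next
      show "P \<subseteq> k ` (supp X1 \<times> supp X2)"
      proof
        fix t assume t: "t \<in> P"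
        obtain u v where tt: "t = (u, v)" by (cases t)
        obtain s1 q1 where u: "u = s1 @ q1" "s1 \<in> lists Fb" "q1 \<in> lists Bs"
          using t unfolding tt P_def srt_def by auto
        obtain s2 q2 where v: "v = s2 @ q2" "s2 \<in> lists Fb" "q2 \<in> lists Bs"
          using t unfolding tt P_def srt_def by auto
        have xu: "x u \<noteq> 0" "y v \<noteq> 0" using t unfolding tt P_def supp_def by auto
        have "(map h s1, q1) \<in> supp X1"
          using xu(1) u map_h_Fb[OF u(2)] by (simp add: supp_def X1_def iota_eq comp_hh)
        moreover have "(map h s2, q2) \<in> supp X2"
          using xu(2) v map_h_Fb[OF v(2)] by (simp add: supp_def X2_def iota_eq comp_hh)
        moreover have "t = k ((map h s1, q1), (map h s2, q2))"
          unfolding tt k_def using u v by (simp add: comp_hh)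
        ultimately show "t \<in> k ` (supp X1 \<times> supp X2)" by blast
      qed
    qed
    also have "(\<Sum>uv\<in>k ` (supp X1 \<times> supp X2). G uv) = (\<Sum>t\<in>supp X1 \<times> supp X2. G (k t))"
    proof (rule sum.reindex[unfolded comp_def])
      show "inj_on k (supp X1 \<times> supp X2)"
      proof (rule inj_onI)
        fix t1 t2 assume t1: "t1 \<in> supp X1 \<times> supp X2" and t2: "t2 \<in> supp X1 \<times> supp X2" and e: "k t1 = k t2"
        obtain a1 b1 c1 d1 where tt1: "t1 = ((a1, b1), (c1, d1))" by (metis prod.collapse)
        obtain a2 b2 c2 d2 where tt2: "t2 = ((a2, b2), (c2, d2))" by (metis prod.collapse)
        have t12: "(a1, b1) \<in> supp X1" "(c1, d1) \<in> supp X2" "(a2, b2) \<in> supp X1" "(c2, d2) \<in> supp X2"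
          using t1 t2 unfolding tt1 tt2 by auto
        have m: "a1 \<in> lists A1" "b1 \<in> lists Bs" "c1 \<in> lists A1" "d1 \<in> lists Bs"
          "a2 \<in> lists A1" "b2 \<in> lists Bs" "c2 \<in> lists A1" "d2 \<in> lists Bs"
          using sX1[OF t12(1)] sX2[OF t12(2)] sX1[OF t12(3)] sX2[OF t12(4)] by auto
        have e1: "map h a1 @ b1 = map h a2 @ b2" and e2: "map h c1 @ d1 = map h c2 @ d2"
          using e unfolding tt1 tt2 k_def by auto
        have "map h a1 = map h a2 \<and> b1 = b2"
          by (rule sorted_split_unique[OF disj _ _ _ _ e1]) (use m map_h_A1 in auto)
        moreover have "map h c1 = map h c2 \<and> d1 = d2"
          by (rule sorted_split_unique[OF disj _ _ _ _ e2]) (use m map_h_A1 in auto)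
        ultimately show "t1 = t2" unfolding tt1 tt2 by (metis map_hh)
      qed
    qed
    also have "\<dots> = tshuffle X1 X2 (p, q)"
      unfolding tshuffle_def case_prod_conv
    proof (rule sum.cong[OF refl])
      fix t assume t: "t \<in> supp X1 \<times> supp X2"
      obtain p1 q1 p2 q2 where tt: "t = ((p1, q1), (p2, q2))" by (metis prod.collapse)
      have t12: "(p1, q1) \<in> supp X1" "(p2, q2) \<in> supp X2" using t unfolding tt by auto
      have a: "p1 \<in> lists A1" "q1 \<in> lists Bs" "p2 \<in> lists A1" "q2 \<in> lists Bs"
        using sX1[OF t12(1)] sX2[OF t12(2)] by auto
      have "shw (map h p1 @ q1) (map h p2 @ q2) (map h p @ q) = shw (map h p1) (map h p2) (map h p) * shw q1 q2 q"
        by (rule shw_srt_split[OF disj q a(2) a(4) sp map_h_A1[OF a(1)] map_h_A1[OF a(3)]])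
      also have "shw (map h p1) (map h p2) (map h p) = shw p1 p2 p" by (rule shw_map[OF inj_h])
      finally show "G (k t) = (\<lambda>((u1, v1), (u2, v2)). X1 (u1, v1) * X2 (u2, v2) * shw u1 u2 p * shw v1 v2 q) t"
        unfolding tt G_def k_def X1_def X2_def using a by (simp add: iota_eq mult_ac)
    qed
    finally show ?thesis .
  qed
qed

lemma iota_unit: "iota f g unit_S = unit_T"
proof (rule ext, clarify)
  fix p q
  show "iota f g unit_S (p, q) = unit_T (p, q)"
    by (auto simp: iota_eq unit_S_def unit_T_def delta_def)
qed

lemma iota_surj:
  assumes T: "T \<in> tensor_S0 A1 Bs"
  shows "T \<in> iota f g ` B0_space"
proof -
  define Y where "Y = (\<lambda>(p, q). T (map h p, q))"
  define x where "x = evl Y"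
  have fT: "finite (supp T)" using T by (simp add: tensor_S0_def)
  have sT: "p \<in> lists A1 \<and> S0word p \<and> q \<in> lists Bs \<and> S0word q" if "(p, q) \<in> supp T" for p q
    using T that unfolding tensor_S0_def by blast
  define N where "N = Max ((\<lambda>(p, q). length p + length q) ` supp T)"
  have Nb: "length p + length q \<le> N" if "Y (p, q) \<noteq> 0" for p q
  proof -
    have "(map h p, q) \<in> supp T" using that by (simp add: Y_def supp_def)
    then have "length (map h p) + length q \<le> N"
      unfolding N_def using Max_ge[OF finite_imageI[OF fT], of "length (map h p) + length q" "\<lambda>(p, q). length p + length q"]
      by (metis (mono_tags, lifting) case_prod_conv image_eqI)
    then show ?thesis by simp
  qed
  have supp_x: "supp x \<subseteq> {w. set w \<subseteq> Aset \<and> length w \<le> N}"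
  proof
    fix w assume w: "w \<in> supp x"
    then have "x w \<noteq> 0" by (simp add: supp_def)
    then have l: "w \<in> lists Aset" using evl_out unfolding x_def by blast
    have "length w \<le> N"
    proof (rule ccontr)
      assume "\<not> length w \<le> N"
      then have "x w = 0" unfolding x_def using Nb by (intro evl_len) force
      then show False using \<open>x w \<noteq> 0\<close> by simp
    qed
    then show "w \<in> {w. set w \<subseteq> Aset \<and> length w \<le> N}" using l by auto
  qed
  have fin: "finite (supp x)"
    by (rule finite_subset[OF supp_x finite_lists_length_le[OF finite_Aset]])
  have lst: "supp x \<subseteq> lists Aset" using supp_x by auto
  have YNN: "Y (p, q) = 0" if "NN p q" for p q
  proof (rule ccontr)
    assume "Y (p, q) \<noteq> 0"
    then have "(map h p, q) \<in> supp T" by (simp add: Y_def supp_def)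
    then have s: "S0word (map h p)" "S0word q" using sT by auto
    from that show False
    proof (unfold NN_def, elim disjE conjE)
      assume "p \<noteq> []" "last p = kF"
      then have "map h p \<noteq> []" "last (map h p) = kF" by (simp_all add: last_map hkF)
      then show False using kF_last s(1) by blast
    next
      assume "q \<noteq> []" "last q = kB"
      then show False using kB_last s(2) by blast
    qed
  qed
  have S0: "S0word w" if "w \<in> supp x" for w
  proof (rule ccontr)
    assume "\<not> S0word w"
    then have "w \<noteq> []" "last w \<in> {kF, kB}" using kk by (auto simp: S0word_def)
    then have "x w = 0" unfolding x_def using evl_last YNN by blast
    then show False using that by (simp add: supp_def)
  qed
  have ck: "\<forall>z\<in>Dom. condK Aset (\<lambda>a b. wedge a b z) x"
    unfolding condK_def x_def using evl_chen by blast
  have xB0: "x \<in> B0_space"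
    using fin lst S0 ck unfolding B0_space_def B_space_iff S_space_def by blast
  have "iota f g x = T"
  proof (rule ext, clarify)
    fix p q
    show "iota f g x (p, q) = T (p, q)"
    proof (cases "p \<in> lists A1 \<and> q \<in> lists Bs")
      case True
      then show ?thesis
        using evl_sorted[OF map_h_A1] by (simp add: iota_eq x_def Y_def comp_hh)
    next
      case False
      then have "(p, q) \<notin> supp T" using sT by blast
      then show ?thesis using False by (auto simp: iota_eq supp_def)
    qed
  qed
  then show ?thesis using xB0 by blast
qed

theorem main:
  "bij_betw (iota f g) B0_space (tensor_S0 A1 Bs) \<and> iota f g unit_S = unit_T \<and>
   (\<forall>x\<in>B0_space. \<forall>y\<in>B0_space. iota f g (shuffle x y) = tshuffle (iota f g x) (iota f g y))"
proof (intro conjI ballI)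
  show "bij_betw (iota f g) B0_space (tensor_S0 A1 Bs)"
    unfolding bij_betw_def
  proof
    show "inj_on (iota f g) B0_space" by (auto intro: inj_onI iota_inj)
    show "iota f g ` B0_space = tensor_S0 A1 Bs" using iota_T0 iota_surj by blast
  qed
  show "iota f g unit_S = unit_T" by (rule iota_unit)
  fix x y assume "x \<in> B0_space" "y \<in> B0_space"
  then show "iota f g (shuffle x y) = tshuffle (iota f g x) (iota f g y)" by (rule iota_mult)
qed

end

lemma mapw_char:
  assumes fk: "\<And>a b. f a = Some b \<longleftrightarrow> b \<in> A \<and> a = k b"
  shows "mapw f u = Some p \<longleftrightarrow> p \<in> lists A \<and> u = map k p"
proof (induction u arbitrary: p)
  case Nil
  then show ?case by auto
next
  case (Cons a u)
  show ?case
  proof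
    assume H: "mapw f (a # u) = Some p"
    then obtain b w' where "f a = Some b" "mapw f u = Some w'" "p = b # w'"
      by (auto split: option.splits)
    then show "p \<in> lists A \<and> a # u = map k p" using Cons.IH fk by auto
  next
    assume H: "p \<in> lists A \<and> a # u = map k p"
    then obtain b w' where p: "p = b # w'" "a = k b" "u = map k w'" "b \<in> A" "w' \<in> lists A"
      by (cases p) auto
    then have "f a = Some b" "mapw f u = Some w'" using fk Cons.IH by auto
    then show "mapw f (a # u) = Some p" using p by simp
  qed
qed

fun h1 :: "letter \<Rightarrow> letter" where
  "h1 Z12 = Z12a" | "h1 Z12a = Z12" | "h1 Z1 = Z1" | "h1 Z11 = Z11" | "h1 Z2 = Z2" | "h1 Z22 = Z22" | "h1 Z12b = Z12b"

fun h2 :: "letter \<Rightarrow> letter" where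
  "h2 Z12 = Z12b" | "h2 Z12b = Z12" | "h2 Z1 = Z1" | "h2 Z11 = Z11" | "h2 Z2 = Z2" | "h2 Z22 = Z22" | "h2 Z12a = Z12a"

definition D1 :: "letter \<Rightarrow> letter \<Rightarrow> letter \<Rightarrow> letter \<Rightarrow> complex" where
  "D1 b f c d = (if b = Z2 \<and> f = Z12 then
       (if c = Z1 \<and> d = Z12 then 1 else if c = Z12 \<and> d = Z1 then -1
        else if c = Z11 \<and> d = Z12 then -1 else if c = Z12 \<and> d = Z11 then 1 else 0)
     else if b = Z22 \<and> f = Z11 then
       (if c = Z11 \<and> d = Z12 then 1 else if c = Z12 \<and> d = Z11 then -1 else 0)
     else if b = Z22 \<and> f = Z12 then
       (if c = Z11 \<and> d = Z12 then -1 else if c = Z12 \<and> d = Z11 then 1 else 0)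
     else 0)"

definition D2 :: "letter \<Rightarrow> letter \<Rightarrow> letter \<Rightarrow> letter \<Rightarrow> complex" where
  "D2 b f c d = (if b = Z1 \<and> f = Z12 then
       (if c = Z2 \<and> d = Z12 then 1 else if c = Z12 \<and> d = Z2 then -1
        else if c = Z22 \<and> d = Z12 then -1 else if c = Z12 \<and> d = Z22 then 1 else 0)
     else if b = Z11 \<and> f = Z22 then
       (if c = Z22 \<and> d = Z12 then 1 else if c = Z12 \<and> d = Z22 then -1 else 0)
     else if b = Z11 \<and> f = Z12 then
       (if c = Z22 \<and> d = Z12 then -1 else if c = Z12 \<and> d = Z22 then 1 else 0)
     else 0)"

lemma Dom_facts:
  assumes "(z1, z2) \<in> Dom"
  shows "z1 \<noteq> 0" "z2 \<noteq> 0" "1 - z1 \<noteq> 0" "1 - z2 \<noteq> 0" "1 - z1 * z2 \<noteq> 0"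
    "1 \<noteq> z1" "1 \<noteq> z2" "1 \<noteq> z1 * z2"
  using assms by (auto simp: Dom_def)

lemma Dom_facts2:
  assumes "(z1, z2) \<in> Dom"
  shows "1 + z1 * (z1 * z2) - (z1 + z1 * z2) \<noteq> 0" "1 + z1 * (z2 * z2) - (z2 + z1 * z2) \<noteq> 0"
    "1 + z1 * z2 - (z1 + z2) \<noteq> 0"
proof -
  note nz = Dom_facts[OF assms]
  have "(1 - z1) * (1 - z1 * z2) \<noteq> 0" using nz by simp
  moreover have "(1 - z1) * (1 - z1 * z2) = 1 + z1 * (z1 * z2) - (z1 + z1 * z2)" by (simp add: algebra_simps)
  ultimately show "1 + z1 * (z1 * z2) - (z1 + z1 * z2) \<noteq> 0" by simp
  have "(1 - z2) * (1 - z1 * z2) \<noteq> 0" using nz by simp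
  moreover have "(1 - z2) * (1 - z1 * z2) = 1 + z1 * (z2 * z2) - (z2 + z1 * z2)" by (simp add: algebra_simps)
  ultimately show "1 + z1 * (z2 * z2) - (z2 + z1 * z2) \<noteq> 0" by simp
  have "(1 - z1) * (1 - z2) \<noteq> 0" using nz by simp
  moreover have "(1 - z1) * (1 - z2) = 1 + z1 * z2 - (z1 + z2)" by (simp add: algebra_simps)
  ultimately show "1 + z1 * z2 - (z1 + z2) \<noteq> 0" by simp
qed

lemma w_zero: "wedge a a z = 0" "wedge Z1 Z11 z = 0" "wedge Z11 Z1 z = 0"
  "wedge Z2 Z22 z = 0" "wedge Z22 Z2 z = 0"
  by (cases z; simp add: wedge_def)+

lemma frac_id:
  fixes a b c z1 z2 :: complex
  assumes "a \<noteq> 0" "b \<noteq> 0" "c \<noteq> 0" "z1 * b + z2 * a = c - a * b"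
  shows "z1 / (a * c) + z2 / (b * c) = 1 / (a * b) - 1 / c"
  using assms by (simp add: field_simps)

lemma keyW:
  assumes z: "z \<in> Dom"
  shows "wedge Z11 Z12 z = - wedge Z22 Z11 z + wedge Z2 Z12 z + wedge Z22 Z12 z"
    "wedge Z1 Z12 z = - wedge Z2 Z12 z"
    "wedge Z22 Z12 z = - wedge Z11 Z22 z + wedge Z1 Z12 z + wedge Z11 Z12 z"
    "wedge Z2 Z12 z = - wedge Z1 Z12 z"
proof -
  obtain z1 z2 where zz: "z = (z1, z2)" by (cases z)
  note nz = Dom_facts[OF z[unfolded zz]]
  define A where "A = z1 / ((1 - z1) * (1 - z1 * z2))"
  define B where "B = z2 / ((1 - z2) * (1 - z1 * z2))"
  define C where "C = 1 / ((1 - z1) * (1 - z2))"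
  define E where "E = 1 / (1 - z1 * z2)"
  have v: "wedge Z11 Z12 z = A" "wedge Z22 Z12 z = - B" "wedge Z22 Z11 z = - C" "wedge Z11 Z22 z = C"
    "wedge Z2 Z12 z = - E" "wedge Z1 Z12 z = E"
    unfolding zz A_def B_def C_def E_def wedge_def using nz by (simp_all add: mult_ac)
  have f: "A + B = C - E" unfolding A_def B_def C_def E_def
    by (rule frac_id) (use nz in \<open>auto simp: algebra_simps\<close>)
  show "wedge Z11 Z12 z = - wedge Z22 Z11 z + wedge Z2 Z12 z + wedge Z22 Z12 z"
    unfolding v using f by (simp add: algebra_simps)
  show "wedge Z1 Z12 z = - wedge Z2 Z12 z" unfolding v by simp
  show "wedge Z22 Z12 z = - wedge Z11 Z22 z + wedge Z1 Z12 z + wedge Z11 Z12 z"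
    unfolding v using f by (simp add: algebra_simps)
  show "wedge Z2 Z12 z = - wedge Z1 Z12 z" unfolding v by simp
qed

lemma w_anti: "wedge Z12 Z1 z = - wedge Z1 Z12 z" "wedge Z12 Z11 z = - wedge Z11 Z12 z"
  "wedge Z12 Z2 z = - wedge Z2 Z12 z" "wedge Z12 Z22 z = - wedge Z22 Z12 z"
  by (simp_all add: wedge_def)

lemma wid1:
  assumes z: "z \<in> Dom" and c: "c \<in> {Z1, Z11, Z12}" and d: "d \<in> {Z1, Z11, Z12}"
  shows "wedge c d z + (\<Sum>\<beta>\<in>{Z2, Z22}. \<Sum>\<phi>\<in>{Z1, Z11, Z12}. D1 \<beta> \<phi> c d * wedge \<beta> \<phi> z) = 0"
  using c d by (auto simp: D1_def w_zero w_anti keyW(1,2)[OF z])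

lemma wid2:
  assumes z: "z \<in> Dom" and c: "c \<in> {Z2, Z22, Z12}" and d: "d \<in> {Z2, Z22, Z12}"
  shows "wedge c d z + (\<Sum>\<beta>\<in>{Z1, Z11}. \<Sum>\<phi>\<in>{Z2, Z22, Z12}. D2 \<beta> \<phi> c d * wedge \<beta> \<phi> z) = 0"
  using c d by (auto simp: D2_def w_zero w_anti keyW(3,4)[OF z])


lemma indep1:
  assumes H: "\<And>z. z \<in> Dom \<Longrightarrow> (\<Sum>\<beta>\<in>{Z2,Z22}. \<Sum>\<phi>\<in>{Z1,Z11,Z12}. r \<beta> \<phi> * wedge \<beta> \<phi> z) = 0"
  shows "r Z2 Z1 = 0 \<and> r Z2 Z11 = 0 \<and> r Z2 Z12 = 0 \<and> r Z22 Z1 = 0 \<and> r Z22 Z11 = 0 \<and> r Z22 Z12 = 0"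
proof -
  have e: "(\<Sum>\<beta>\<in>{Z2,Z22}. \<Sum>\<phi>\<in>{Z1,Z11,Z12}. r \<beta> \<phi> * wedge \<beta> \<phi> (a,b)) = 0"
    if "(a,b) \<in> {(2,2),(2,3),(2,-1),(3,2),(3,3),(3,-1)}" for a b
    by (rule H) (use that in \<open>auto simp: Dom_def\<close>)
  note e1 = e[of 2 2, simplified wedge_def, simplified]
  note e2 = e[of 2 3, simplified wedge_def, simplified]
  note e3 = e[of 2 "-1", simplified wedge_def, simplified]
  note e4 = e[of 3 2, simplified wedge_def, simplified]
  note e5 = e[of 3 3, simplified wedge_def, simplified]
  note e6 = e[of 3 "-1", simplified wedge_def, simplified]
  note R = e1 e2 e3 e4 e5 e6
  have Re: "Re (r Z2 Z1) = 0 \<and> Re (r Z2 Z11) = 0 \<and> Re (r Z2 Z12) = 0 \<and> Re (r Z22 Z1) = 0 \<and> Re (r Z22 Z11) = 0 \<and> Re (r Z22 Z12) = 0"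
    using R[THEN arg_cong[of _ _ Re]] by simp
  have Im: "Im (r Z2 Z1) = 0 \<and> Im (r Z2 Z11) = 0 \<and> Im (r Z2 Z12) = 0 \<and> Im (r Z22 Z1) = 0 \<and> Im (r Z22 Z11) = 0 \<and> Im (r Z22 Z12) = 0"
    using R[THEN arg_cong[of _ _ Im]] by simp
  show ?thesis using Re Im by (simp add: complex_eq_iff)
qed

lemma indep2:
  assumes H: "\<And>z. z \<in> Dom \<Longrightarrow> (\<Sum>\<beta>\<in>{Z1,Z11}. \<Sum>\<phi>\<in>{Z2,Z22,Z12}. r \<beta> \<phi> * wedge \<beta> \<phi> z) = 0"
  shows "r Z1 Z2 = 0 \<and> r Z1 Z22 = 0 \<and> r Z1 Z12 = 0 \<and> r Z11 Z2 = 0 \<and> r Z11 Z22 = 0 \<and> r Z11 Z12 = 0"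
proof -
  have e: "(\<Sum>\<beta>\<in>{Z1,Z11}. \<Sum>\<phi>\<in>{Z2,Z22,Z12}. r \<beta> \<phi> * wedge \<beta> \<phi> (a,b)) = 0"
    if "(a,b) \<in> {(2,2),(3,2),(-1,2),(2,3),(3,3),(-1,3)}" for a b
    by (rule H) (use that in \<open>auto simp: Dom_def\<close>)
  note e1 = e[of 2 2, simplified wedge_def, simplified]
  note e2 = e[of 3 2, simplified wedge_def, simplified]
  note e3 = e[of "-1" 2, simplified wedge_def, simplified]
  note e4 = e[of 2 3, simplified wedge_def, simplified]
  note e5 = e[of 3 3, simplified wedge_def, simplified]
  note e6 = e[of "-1" 3, simplified wedge_def, simplified]
  note R = e1 e2 e3 e4 e5 e6
  have Re: "Re (r Z1 Z2) = 0 \<and> Re (r Z1 Z22) = 0 \<and> Re (r Z1 Z12) = 0 \<and> Re (r Z11 Z2) = 0 \<and> Re (r Z11 Z22) = 0 \<and> Re (r Z11 Z12) = 0"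
    using R[THEN arg_cong[of _ _ Re]] by simp
  have Im: "Im (r Z1 Z2) = 0 \<and> Im (r Z1 Z22) = 0 \<and> Im (r Z1 Z12) = 0 \<and> Im (r Z11 Z2) = 0 \<and> Im (r Z11 Z22) = 0 \<and> Im (r Z11 Z12) = 0"
    using R[THEN arg_cong[of _ _ Im]] by simp
  show ?thesis using Re Im by (simp add: complex_eq_iff)
qed


lemma pr1_12_char: "pr1_12 a = Some b \<longleftrightarrow> b \<in> {Z1, Z11, Z12a} \<and> a = h1 b"
  by (cases a; cases b) auto

lemma pr2_12_char: "pr2_12 a = Some b \<longleftrightarrow> b \<in> {Z2, Z22} \<and> a = id b"
  by (cases a; cases b) auto

lemma pr2_21_char: "pr2_21 a = Some b \<longleftrightarrow> b \<in> {Z2, Z22, Z12b} \<and> a = h2 b"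
  by (cases a; cases b) auto

lemma pr1_21_char: "pr1_21 a = Some b \<longleftrightarrow> b \<in> {Z1, Z11} \<and> a = id b"
  by (cases a; cases b) auto

interpretation I1: fib "{Z1, Z11, Z12}" "{Z2, Z22}" Z1 Z2 D1 "{Z1, Z11, Z12a}" h1 pr1_12 pr2_12
proof unfold_locales
  show "Aset = {Z1, Z11, Z12} \<union> {Z2, Z22}" by (auto simp: Aset_def)
  show "{Z1, Z11, Z12} \<inter> {Z2, Z22} = {}" by auto
  show "Z1 \<in> {Z1, Z11, Z12}" by simp
  show "Z2 \<in> {Z2, Z22}" by simp
  show "{Z1, Z2} = {Z1, Z2}" by simp
  show "\<And>\<beta> c d. D1 \<beta> Z1 c d = 0" by (simp add: D1_def)
  show "\<And>z c d. z \<in> Dom \<Longrightarrow> c \<in> {Z1, Z11, Z12} \<Longrightarrow> d \<in> {Z1, Z11, Z12} \<Longrightarrow>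
        wedge c d z + (\<Sum>\<beta>\<in>{Z2, Z22}. \<Sum>\<phi>\<in>{Z1, Z11, Z12}. D1 \<beta> \<phi> c d * wedge \<beta> \<phi> z) = 0"
    by (rule wid1)
  show "\<And>a b z. a \<in> {Z2, Z22} \<Longrightarrow> b \<in> {Z2, Z22} \<Longrightarrow> wedge a b z = 0"
    by (auto simp: w_zero)
  show "\<And>r \<beta> \<phi>. (\<And>z. z \<in> Dom \<Longrightarrow> (\<Sum>\<beta>\<in>{Z2, Z22}. \<Sum>\<phi>\<in>{Z1, Z11, Z12}. r \<beta> \<phi> * wedge \<beta> \<phi> z) = 0) \<Longrightarrow>
        \<beta> \<in> {Z2, Z22} \<Longrightarrow> \<phi> \<in> {Z1, Z11, Z12} \<Longrightarrow> r \<beta> \<phi> = 0"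
    using indep1 by blast
  show "\<And>a. h1 (h1 a) = a" by (case_tac a) simp_all
  show "\<And>a. a \<in> {Z1, Z11, Z12a} \<Longrightarrow> h1 a \<in> {Z1, Z11, Z12}" by auto
  show "\<And>a. a \<in> {Z1, Z11, Z12} \<Longrightarrow> h1 a \<in> {Z1, Z11, Z12a}" by auto
  show "h1 Z1 = Z1" by simp
  show "Z2 \<notin> {Z1, Z11, Z12a}" by simp
  show "finite {Z1, Z11, Z12a}" by simp
  show "\<And>u p. mapw pr1_12 u = Some p \<longleftrightarrow> p \<in> lists {Z1, Z11, Z12a} \<and> u = map h1 p"
    by (rule mapw_char[OF pr1_12_char])
  show "\<And>v q. mapw pr2_12 v = Some q \<longleftrightarrow> q \<in> lists {Z2, Z22} \<and> v = q"
    using mapw_char[OF pr2_12_char] by simp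
qed

interpretation I2: fib "{Z2, Z22, Z12}" "{Z1, Z11}" Z2 Z1 D2 "{Z2, Z22, Z12b}" h2 pr2_21 pr1_21
proof unfold_locales
  show "Aset = {Z2, Z22, Z12} \<union> {Z1, Z11}" by (auto simp: Aset_def)
  show "{Z2, Z22, Z12} \<inter> {Z1, Z11} = {}" by auto
  show "Z2 \<in> {Z2, Z22, Z12}" by simp
  show "Z1 \<in> {Z1, Z11}" by simp
  show "{Z1, Z2} = {Z2, Z1}" by auto
  show "\<And>\<beta> c d. D2 \<beta> Z2 c d = 0" by (simp add: D2_def)
  show "\<And>z c d. z \<in> Dom \<Longrightarrow> c \<in> {Z2, Z22, Z12} \<Longrightarrow> d \<in> {Z2, Z22, Z12} \<Longrightarrow>
        wedge c d z + (\<Sum>\<beta>\<in>{Z1, Z11}. \<Sum>\<phi>\<in>{Z2, Z22, Z12}. D2 \<beta> \<phi> c d * wedge \<beta> \<phi> z) = 0"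
    by (rule wid2)
  show "\<And>a b z. a \<in> {Z1, Z11} \<Longrightarrow> b \<in> {Z1, Z11} \<Longrightarrow> wedge a b z = 0"
    by (auto simp: w_zero)
  show "\<And>r \<beta> \<phi>. (\<And>z. z \<in> Dom \<Longrightarrow> (\<Sum>\<beta>\<in>{Z1, Z11}. \<Sum>\<phi>\<in>{Z2, Z22, Z12}. r \<beta> \<phi> * wedge \<beta> \<phi> z) = 0) \<Longrightarrow>
        \<beta> \<in> {Z1, Z11} \<Longrightarrow> \<phi> \<in> {Z2, Z22, Z12} \<Longrightarrow> r \<beta> \<phi> = 0"
    using indep2 by blast
  show "\<And>a. h2 (h2 a) = a" by (case_tac a) simp_all
  show "\<And>a. a \<in> {Z2, Z22, Z12b} \<Longrightarrow> h2 a \<in> {Z2, Z22, Z12}" by auto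
  show "\<And>a. a \<in> {Z2, Z22, Z12} \<Longrightarrow> h2 a \<in> {Z2, Z22, Z12b}" by auto
  show "h2 Z2 = Z2" by simp
  show "Z1 \<notin> {Z2, Z22, Z12b}" by simp
  show "finite {Z2, Z22, Z12b}" by simp
  show "\<And>u p. mapw pr2_21 u = Some p \<longleftrightarrow> p \<in> lists {Z2, Z22, Z12b} \<and> u = map h2 p"
    by (rule mapw_char[OF pr2_21_char])
  show "\<And>v q. mapw pr1_21 v = Some q \<longleftrightarrow> q \<in> lists {Z1, Z11} \<and> v = q"
    using mapw_char[OF pr1_21_char] by simp
qed

theorem corollary5p9:
  shows "unit_S \<in> B0_space
    \<and> (\<forall>x\<in>B0_space. \<forall>y\<in>B0_space. shuffle x y \<in> B0_space)
    \<and> bij_betw (iota pr1_12 pr2_12) B0_space (tensor_S0 {Z1, Z11, Z12a} {Z2, Z22})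
    \<and> iota pr1_12 pr2_12 unit_S = unit_T
    \<and> (\<forall>x\<in>B0_space. \<forall>y\<in>B0_space.
         iota pr1_12 pr2_12 (shuffle x y) = tshuffle (iota pr1_12 pr2_12 x) (iota pr1_12 pr2_12 y))
    \<and> bij_betw (iota pr2_21 pr1_21) B0_space (tensor_S0 {Z2, Z22, Z12b} {Z1, Z11})
    \<and> iota pr2_21 pr1_21 unit_S = unit_T
    \<and> (\<forall>x\<in>B0_space. \<forall>y\<in>B0_space.
         iota pr2_21 pr1_21 (shuffle x y) = tshuffle (iota pr2_21 pr1_21 x) (iota pr2_21 pr1_21 y))"
  using unit_B0 shuffle_B0 I1.main I2.main by blast


end
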